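(* Under the setting below, every vertex of $G_{15}$ has degree at most $15$.
   Context: Setting: $V$ is a finite set of points (vertices) in the plane and $S$ a finite set of simple polygonal obstacles, pairwise non-intersecting, all of whose corners lie in $V$; each vertex is a corner of at most one obstacle and occurs at most once on its boundary. General position: no three vertices collinear and no two vertices on a line parallel to a cone boundary ray. Points $p,q$ are visible if segment $pq$ does not properly intersect any obstacle (touching at vertices or running along boundaries is allowed, meeting an obstacle interior is not). Cones: around each vertex $u$ the plane is partitioned into six cones of angle $\pi/3$ with apex $u$; $C_0^u$ has the upward vertical bisector, and counterclockwise the cones are $C_0^u,\overline{C_2^u},C_1^u,\overline{C_0^u},C_2^u,\overline{C_1^u}$ (positive cones $C_i$, negative cones $\overline{C_i}$, indices mod 3). If the obstacle having $u$ as a corner splits a cone so that there are vertices visible from $u$ on both sides of the obstacle within it, the cone is regarded as two subcones; otherwise a single subcone. $G_\infty$: for every vertex $u$ and every positive subcone of $u$, add an edge from $u$ to the vertex visible from $u$ in that subcone whose orthogonal projection onto the cone's bisector is closest to $u$. $G_{15}$ is obtained from $G_\infty$ by, for every vertex $u$ and every negative subcone of $u$, deleting all edges of $G_\infty$ incident to $u$ that lie in that subcone except the leftmost one (clockwise extreme as seen from $u$), the rightmost one (counterclockwise extreme), and the one to the closest vertex (smallest projection onto the cone's bisector). *)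

theory Defs
  imports "HOL-Analysis.Analysis"
begin

type_synonym pt = "real \<times> real"

definition dir :: "real \<Rightarrow> pt" where
  "dir th = (cos th, sin th)"

definition dotp :: "pt \<Rightarrow> pt \<Rightarrow> real" where
  "dotp a b = fst a * fst b + snd a * snd b"

definition cross :: "pt \<Rightarrow> pt \<Rightarrow> real" where
  "cross a b = fst a * snd b - snd a * fst b"

definition poly_edge :: "pt list \<Rightarrow> nat \<Rightarrow> pt set" where
  "poly_edge P i = closed_segment (P ! i) (P ! ((i + 1) mod length P))"

definition poly_boundary :: "pt list \<Rightarrow> pt set" where
  "poly_boundary P = (\<Union>i<length P. poly_edge P i)"

definition simple_polygon :: "pt list \<Rightarrow> bool" where
  "simple_polygon P \<longleftrightarrow> length P \<ge> 3 \<and> distinct P \<and>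
     (\<forall>i<length P. \<forall>j<length P. i \<noteq> j \<longrightarrow>
        poly_edge P i \<inter> poly_edge P j =
          (if j = (i + 1) mod length P then {P ! j}
           else if i = (j + 1) mod length P then {P ! i} else {}))"

definition obstacle_region :: "pt list \<Rightarrow> pt set" where
  "obstacle_region P = poly_boundary P \<union> inside (poly_boundary P)"

definition visible :: "pt list set \<Rightarrow> pt \<Rightarrow> pt \<Rightarrow> bool" where
  "visible S p q \<longleftrightarrow> (\<forall>Ob\<in>S. closed_segment p q \<inter> inside (poly_boundary Ob) = {})"

definition valid_setting :: "pt set \<Rightarrow> pt list set \<Rightarrow> bool" where
  "valid_setting V S \<longleftrightarrow>
     finite V \<and> finite S \<and>
     (\<forall>Ob\<in>S. simple_polygon Ob \<and> set Ob \<subseteq> V) \<and>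
     (\<forall>O1\<in>S. \<forall>O2\<in>S. O1 \<noteq> O2 \<longrightarrow> obstacle_region O1 \<inter> obstacle_region O2 = {}) \<and>
     (\<forall>v. \<forall>O1\<in>S. \<forall>O2\<in>S. v \<in> set O1 \<and> v \<in> set O2 \<longrightarrow> O1 = O2) \<and>
     (\<forall>a\<in>V. \<forall>b\<in>V. \<forall>c\<in>V. a \<noteq> b \<and> a \<noteq> c \<and> b \<noteq> c \<longrightarrow> \<not> collinear {a, b, c}) \<and>
     (\<forall>u\<in>V. \<forall>v\<in>V. u \<noteq> v \<longrightarrow> (\<forall>k<(3::nat). cross (v - u) (dir (real k * pi / 3)) \<noteq> 0))"

text \<open>Bisector angles: positive cone C_i has bisector pi/2 + 2 pi i/3, negative cone
  the opposite direction. Cone k with bisector b is the half-open angular range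
  [b - pi/6, b + pi/6) around the apex.\<close>
definition pos_bis :: "nat \<Rightarrow> real" where
  "pos_bis i = pi / 2 + 2 * pi * real i / 3"

definition neg_bis :: "nat \<Rightarrow> real" where
  "neg_bis i = 3 * pi / 2 + 2 * pi * real i / 3"

definition in_cone :: "real \<Rightarrow> pt \<Rightarrow> pt \<Rightarrow> bool" where
  "in_cone b u v \<longleftrightarrow> v \<noteq> u \<and> dotp (v - u) (dir b) \<ge> cos (pi / 6) * norm (v - u) \<and>
     \<not> (\<exists>t>0. v - u = t *\<^sub>R dir (b + pi / 6))"

definition proj :: "real \<Rightarrow> pt \<Rightarrow> pt \<Rightarrow> real" where
  "proj b u v = dotp (v - u) (dir b)"

text \<open>Two vertices v, w (in the same cone of u) are in the same subcone iff the obstacle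
  having u as a corner does not lie between the rays uv and uw near u.\<close>
definition same_side :: "pt list set \<Rightarrow> pt \<Rightarrow> pt \<Rightarrow> pt \<Rightarrow> bool" where
  "same_side S u v w \<longleftrightarrow> (\<forall>Ob\<in>S. u \<in> set Ob \<longrightarrow>
     (\<exists>e>0. \<forall>s t. 0 \<le> s \<and> 0 \<le> t \<and> s + t \<le> e \<longrightarrow>
        u + s *\<^sub>R (v - u) + t *\<^sub>R (w - u) \<notin> inside (poly_boundary Ob)))"

definition subcone_of :: "pt set \<Rightarrow> pt list set \<Rightarrow> real \<Rightarrow> pt \<Rightarrow> pt \<Rightarrow> pt set" where
  "subcone_of V S b u v = {w \<in> V. in_cone b u w \<and> visible S u w \<and> same_side S u v w}"

definition ginf_choice :: "pt set \<Rightarrow> pt list set \<Rightarrow> pt \<Rightarrow> pt \<Rightarrow> bool" where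
  "ginf_choice V S u v \<longleftrightarrow> u \<in> V \<and> v \<in> V \<and>
     (\<exists>i<(3::nat). in_cone (pos_bis i) u v \<and> visible S u v \<and>
        (\<forall>w\<in>subcone_of V S (pos_bis i) u v. proj (pos_bis i) u v \<le> proj (pos_bis i) u w))"

definition ginf_edge :: "pt set \<Rightarrow> pt list set \<Rightarrow> pt \<Rightarrow> pt \<Rightarrow> bool" where
  "ginf_edge V S u v \<longleftrightarrow> ginf_choice V S u v \<or> ginf_choice V S v u"

text \<open>Edge uv survives the pruning at u: if v lies in a negative subcone of u, v must be
  the clockwise-extreme, counterclockwise-extreme or closest G_inf neighbour of u there.\<close>
definition keep_at :: "pt set \<Rightarrow> pt list set \<Rightarrow> pt \<Rightarrow> pt \<Rightarrow> bool" where
  "keep_at V S u v \<longleftrightarrow> (\<forall>i<(3::nat). in_cone (neg_bis i) u v \<and> visible S u v \<longrightarrow>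
     (let N = {w \<in> subcone_of V S (neg_bis i) u v. ginf_edge V S u w} in
        (\<forall>w\<in>N. cross (v - u) (w - u) \<ge> 0) \<or>
        (\<forall>w\<in>N. cross (v - u) (w - u) \<le> 0) \<or>
        (\<forall>w\<in>N. proj (neg_bis i) u v \<le> proj (neg_bis i) u w)))"

definition g15_edge :: "pt set \<Rightarrow> pt list set \<Rightarrow> pt \<Rightarrow> pt \<Rightarrow> bool" where
  "g15_edge V S u v \<longleftrightarrow> ginf_edge V S u v \<and> keep_at V S u v \<and> keep_at V S v u"

definition degree15 :: "pt set \<Rightarrow> pt list set \<Rightarrow> pt \<Rightarrow> nat" where
  "degree15 V S u = card {v \<in> V. g15_edge V S u v}"

end

theory Submission
  imports Defs
begin

lemma cross_lin1: "cross (x + y) z = cross x z + cross y z" "cross (dx *\<^sub>R x) z = dx * cross x z"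
  "cross z (x + y) = cross z x + cross z y" "cross z (dx *\<^sub>R x) = dx * cross z x"
  "cross (x - y) z = cross x z - cross y z" "cross z (x - y) = cross z x - cross z y"
  "cross (-x) z = - cross x z" "cross z (-x) = - cross z x"
  by (auto simp: cross_def algebra_simps)

lemma cone_alg:
  fixes r p q :: real
  assumes s3: "r*r = 3" "r > 0"
  shows "(p*p+q*q>0 \<and> p \<ge> r/2 * sqrt(p*p+q*q) \<and> \<not>(p = r*q \<and> q > 0)) \<longleftrightarrow>
         (p*p+q*q>0 \<and> r*q+p \<ge> 0 \<and> p - r*q > 0)"
proof
  assume A: "p*p+q*q>0 \<and> p \<ge> r/2 * sqrt(p*p+q*q) \<and> \<not>(p = r*q \<and> q > 0)"
  define N where "N = sqrt(p*p+q*q)"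
  have N0: "N \<ge> 0" unfolding N_def by simp
  have NN: "N*N = p*p+q*q" unfolding N_def using A by (metis abs_of_pos real_sqrt_mult_self)
  have p0: "2*p \<ge> r*N" using A N_def by auto
  have "r*N \<ge> 0" using N0 s3 by auto
  then have "(r*N)*(r*N) \<le> (2*p)*(2*p)" using p0 by (meson mult_mono order_trans)
  moreover have "(r*N)*(r*N) = (r*r)*(N*N)" by (simp add: mult_ac)
  ultimately have "3*(p*p+q*q) \<le> 4*(p*p)" using NN s3(1) by simp
  then have "3*(q*q) \<le> p*p" by (simp add: ring_distribs)
  moreover have "(r*q)*(r*q) = 3*(q*q)"
  proof - have "(r*q)*(r*q) = (r*r)*(q*q)" by (simp add: mult_ac) thus ?thesis using s3(1) by simp qed
  ultimately have "(r*q)*(r*q) \<le> p*p" by linarith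
  then have "\<bar>r*q\<bar> \<le> \<bar>p\<bar>" by (simp add: abs_le_square_iff power2_eq_square)
  then have h: "\<bar>r*q\<bar> \<le> p" using p0 \<open>r*N \<ge> 0\<close> by auto
  have "p - r*q \<noteq> 0"
  proof
    assume e: "p - r*q = 0"
    have "r*q \<ge> 0" using h e by linarith
    then have "q \<ge> 0" using s3 by (simp add: zero_le_mult_iff)
    moreover have "q \<noteq> 0" using e A by auto
    ultimately show False using A e by auto
  qed
  then show "p*p+q*q>0 \<and> r*q+p \<ge> 0 \<and> p - r*q > 0" using h A by auto
next
  assume B: "p*p+q*q>0 \<and> r*q+p \<ge> 0 \<and> p - r*q > 0"
  then have h: "\<bar>r*q\<bar> \<le> p" by auto
  then have "\<bar>r*q\<bar> \<le> \<bar>p\<bar>" by auto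
  then have "(r*q)*(r*q) \<le> p*p" by (simp add: abs_le_square_iff power2_eq_square)
  moreover have "(r*q)*(r*q) = 3*(q*q)"
  proof - have "(r*q)*(r*q) = (r*r)*(q*q)" by (simp add: mult_ac) thus ?thesis using s3(1) by simp qed
  ultimately have "3*(q*q) \<le> p*p" by linarith
  then have "3*(p*p+q*q) \<le> (2*p)*(2*p)" by (simp add: ring_distribs)
  then have sq1: "sqrt (3*(p*p+q*q)) \<le> sqrt ((2*p)*(2*p))" using real_sqrt_le_mono by blast
  have sq2: "sqrt ((2*p)*(2*p)) = 2*p"
  proof -
    have "p \<ge> 0" using h by (meson abs_ge_zero order_trans)
    have "sqrt ((2*p)*(2*p)) = \<bar>2*p\<bar>" by (rule real_sqrt_abs2)
    also have "\<dots> = 2*p" using \<open>p \<ge> 0\<close> by simp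
    finally show ?thesis .
  qed
  have sq3: "sqrt (3*(p*p+q*q)) \<le> 2*p" using sq1 sq2 by linarith
  have "sqrt 3 = r" using s3 by (metis abs_of_pos real_sqrt_abs2)
  then have "sqrt (3*(p*p+q*q)) = r * sqrt(p*p+q*q)" by (simp only: real_sqrt_mult)
  with sq3 have "p \<ge> r/2 * sqrt(p*p+q*q)" by auto
  then show "p*p+q*q>0 \<and> p \<ge> r/2 * sqrt(p*p+q*q) \<and> \<not>(p = r*q \<and> q > 0)" using B by auto
qed

lemma in_cone_iff:
  "in_cone b u v \<longleftrightarrow> v \<noteq> u \<and> cross (dir (b - pi/6)) (v - u) \<ge> 0 \<and> cross (v - u) (dir (b + pi/6)) > 0"
proof -
  define dx where "dx = cos b"
  define dy where "dy = sin b"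
  define r where "r = sqrt 3"
  obtain x1 x2 where xx: "v - u = (x1, x2)" by (cases "v - u") auto
  have cs: "dx*dx + dy*dy = 1" unfolding dx_def dy_def by (metis power2_eq_square sin_cos_squared_add2)
  have s3: "r * r = 3" "r > 0" unfolding r_def by auto
  have dL: "dir (b - pi/6) = (dx*r/2 + dy/2, dy*r/2 - dx/2)"
    by (simp add: dir_def cos_diff sin_diff cos_30 sin_30 dx_def dy_def r_def)
  have dU: "dir (b + pi/6) = (dx*r/2 - dy/2, dy*r/2 + dx/2)"
    by (simp add: dir_def cos_add sin_add cos_30 sin_30 dx_def dy_def r_def)
  define p where "p = x1*dx + x2*dy"
  define q where "q = dx*x2 - dy*x1"
  have "p*dx - q*dy = x1*(dx*dx+dy*dy)" by (simp add: p_def q_def algebra_simps)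
  then have x1e: "x1 = p*dx - q*dy" using cs by simp
  have "p*dy + q*dx = x2*(dx*dx+dy*dy)" by (simp add: p_def q_def algebra_simps)
  then have x2e: "x2 = p*dy + q*dx" using cs by simp
  have "p*p + q*q = (x1*x1 + x2*x2)*(dx*dx+dy*dy)" by (simp add: p_def q_def algebra_simps)
  then have nn: "x1*x1 + x2*x2 = p*p + q*q" using cs by simp
  have nrm: "norm (v - u) = sqrt (p*p + q*q)"
    using nn by (simp add: xx norm_prod_def power2_eq_square)
  have dotp: "dotp (v - u) (dir b) = p" by (simp add: xx dotp_def dir_def p_def dx_def dy_def)
  have crL: "cross (dir (b - pi/6)) (v - u) = (r*q + p)/2"
    by (simp add: dL xx cross_def p_def q_def algebra_simps)
  have crU: "cross (v - u) (dir (b + pi/6)) = (p - r*q)/2"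
    by (simp add: dU xx cross_def p_def q_def algebra_simps)
  have c30: "cos (pi/6) = r/2" by (simp add: cos_30 r_def)
  have z: "v \<noteq> u \<longleftrightarrow> p*p + q*q > 0"
  proof -
    have "v \<noteq> u \<longleftrightarrow> (x1, x2) \<noteq> 0" using xx by (metis right_minus_eq)
    also have "\<dots> \<longleftrightarrow> x1 \<noteq> 0 \<or> x2 \<noteq> 0" by (simp add: zero_prod_def)
    also have "\<dots> \<longleftrightarrow> x1*x1 + x2*x2 > 0" by (simp add: sum_squares_gt_zero_iff)
    finally show ?thesis using nn by simp
  qed
  have ray: "(\<exists>t>0. v - u = t *\<^sub>R dir (b + pi/6)) \<longleftrightarrow> p = r*q \<and> q > 0"
  proof
    assume "\<exists>t>0. v - u = t *\<^sub>R dir (b + pi/6)"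
    then obtain t where t: "t > 0" "x1 = t*(dx*r/2 - dy/2)" "x2 = t*(dy*r/2 + dx/2)" 
      using xx dU by auto
    have "p = t*r/2*(dx*dx+dy*dy)" unfolding p_def t(2,3) by (simp add: algebra_simps)
    moreover have "q = t/2*(dx*dx+dy*dy)" unfolding q_def t(2,3) by (simp add: algebra_simps)
    ultimately have e1: "p = t*r/2" and e2: "q = t/2" using cs by simp_all
    show "p = r*q \<and> q > 0" unfolding e1 e2 using t by simp
  next
    assume pq: "p = r*q \<and> q > 0"
    have "v - u = (2*q) *\<^sub>R dir (b + pi/6)"
      unfolding xx dU using x1e x2e pq by (simp add: algebra_simps)
    then show "\<exists>t>0. v - u = t *\<^sub>R dir (b + pi/6)" using pq by (intro exI[of _ "2*q"]) auto
  qed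
  have "in_cone b u v \<longleftrightarrow> (p*p+q*q>0 \<and> p \<ge> r/2 * sqrt(p*p+q*q) \<and> \<not>(p = r*q \<and> q > 0))"
    unfolding in_cone_def by (simp only: z dotp nrm c30 ray)
  also have "\<dots> \<longleftrightarrow> (p*p+q*q>0 \<and> r*q+p \<ge> 0 \<and> p - r*q > 0)" by (rule cone_alg[OF s3])
  also have "\<dots> \<longleftrightarrow> v \<noteq> u \<and> cross (dir (b - pi/6)) (v - u) \<ge> 0 \<and> cross (v - u) (dir (b + pi/6)) > 0"
    using z crL crU by auto
  finally show ?thesis .
qed

definition cb :: "nat \<Rightarrow> real" where
  "cb j = (if j < 3 then pos_bis j else neg_bis (j - 3))"

lemma dir_base: "dir (pi/3) = (1/2, sqrt 3/2)" "dir (pi/6) = (sqrt 3/2, 1/2)"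
  "dir (pi/2) = (0,1)" "dir 0 = (1,0)" "dir pi = (-1,0)"
  by (simp_all add: dir_def cos_60 sin_60 cos_30 sin_30)

lemma dir_shift: "dir (pi + x) = - dir x" "dir (2*pi + x) = dir x"
  "dir (pi - x) = (- fst (dir x), snd (dir x))" "dir (2*pi - x) = (fst (dir x), - snd (dir x))"
  by (simp_all add: dir_def cos_add sin_add cos_diff sin_diff)

lemma cb_dirs:
  "dir (cb 0) = (0,1)" "dir (cb 0 - pi/6) = (1/2, sqrt 3/2)" "dir (cb 0 + pi/6) = (-1/2, sqrt 3/2)"
  "dir (cb 1) = (-sqrt 3/2, -1/2)" "dir (cb 1 - pi/6) = (-1, 0)" "dir (cb 1 + pi/6) = (-1/2, -sqrt 3/2)"
  "dir (cb 2) = (sqrt 3/2, -1/2)" "dir (cb 2 - pi/6) = (1/2, -sqrt 3/2)" "dir (cb 2 + pi/6) = (1, 0)"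
  "dir (cb 3) = (0,-1)" "dir (cb 3 - pi/6) = (-1/2, -sqrt 3/2)" "dir (cb 3 + pi/6) = (1/2, -sqrt 3/2)"
  "dir (cb 4) = (sqrt 3/2, 1/2)" "dir (cb 4 - pi/6) = (1, 0)" "dir (cb 4 + pi/6) = (1/2, sqrt 3/2)"
  "dir (cb 5) = (-sqrt 3/2, 1/2)" "dir (cb 5 - pi/6) = (-1/2, sqrt 3/2)" "dir (cb 5 + pi/6) = (-1, 0)"
proof -
  have a1: "cb 0 - pi/6 = pi/3" "cb 0 + pi/6 = pi - pi/3"
    "cb 1 - pi/6 = pi" "cb 1 + pi/6 = pi + pi/3"
    "cb 2 - pi/6 = 2*pi - pi/3" "cb 2 + pi/6 = 2*pi + 0"
    "cb 3 - pi/6 = pi + pi/3" "cb 3 + pi/6 = 2*pi - pi/3"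
    "cb 4 - pi/6 = 2*pi + 0" "cb 4 + pi/6 = 2*pi + pi/3"
    "cb 5 - pi/6 = 2*pi + (pi - pi/3)" "cb 5 + pi/6 = 2*pi + pi"
    by (simp_all add: cb_def pos_bis_def neg_bis_def field_simps)
  have a0: "cb 0 = pi/2" "cb 1 = pi + pi/6" "cb 2 = 2*pi - pi/6" "cb 3 = pi + pi/2"
    "cb 4 = 2*pi + pi/6" "cb 5 = 2*pi + (pi - pi/6)"
    by (simp_all add: cb_def pos_bis_def neg_bis_def field_simps)
  show "dir (cb 0) = (0,1)" "dir (cb 0 - pi/6) = (1/2, sqrt 3/2)" "dir (cb 0 + pi/6) = (-1/2, sqrt 3/2)"
  "dir (cb 1) = (-sqrt 3/2, -1/2)" "dir (cb 1 - pi/6) = (-1, 0)" "dir (cb 1 + pi/6) = (-1/2, -sqrt 3/2)"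
  "dir (cb 2) = (sqrt 3/2, -1/2)" "dir (cb 2 - pi/6) = (1/2, -sqrt 3/2)" "dir (cb 2 + pi/6) = (1, 0)"
  "dir (cb 3) = (0,-1)" "dir (cb 3 - pi/6) = (-1/2, -sqrt 3/2)" "dir (cb 3 + pi/6) = (1/2, -sqrt 3/2)"
  "dir (cb 4) = (sqrt 3/2, 1/2)" "dir (cb 4 - pi/6) = (1, 0)" "dir (cb 4 + pi/6) = (1/2, sqrt 3/2)"
  "dir (cb 5) = (-sqrt 3/2, 1/2)" "dir (cb 5 - pi/6) = (-1/2, sqrt 3/2)" "dir (cb 5 + pi/6) = (-1, 0)"
    unfolding a1 unfolding a0 unfolding dir_shift dir_base by simp_all
qed

fun cc :: "nat \<Rightarrow> real \<Rightarrow> real \<Rightarrow> bool" where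
  "cc 0 y a = (y \<ge> a \<and> y > -a)"
| "cc (Suc 0) y a = (y \<le> 0 \<and> y > a)"
| "cc (Suc (Suc 0)) y a = (y \<ge> -a \<and> y < 0)"
| "cc (Suc (Suc (Suc 0))) y a = (y \<le> a \<and> y < -a)"
| "cc (Suc (Suc (Suc (Suc 0)))) y a = (y \<ge> 0 \<and> y < a)"
| "cc (Suc (Suc (Suc (Suc (Suc 0))))) y a = (y \<le> -a \<and> y > 0)"
| "cc _ y a = False"

lemma six_cases: "(j::nat) < 6 \<Longrightarrow> j = 0 \<or> j = 1 \<or> j = 2 \<or> j = 3 \<or> j = 4 \<or> j = 5" by auto

lemma cc_of:
  assumes "in_cone b u v" "v - u = (x1,x2)" "dir (b - pi/6) = (l1,l2)" "dir (b + pi/6) = (u1,u2)"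
  shows "l1*x2 - l2*x1 \<ge> 0 \<and> x1*u2 - x2*u1 > 0"
  using assms by (auto simp: in_cone_iff cross_def)

lemma cone_cc:
  assumes "j < 6" "in_cone (cb j) u v" "v - u = (x1, x2)"
  shows "cc j x2 (sqrt 3 * x1)"
proof -
  have "j = 0 \<or> j = 1 \<or> j = 2 \<or> j = 3 \<or> j = 4 \<or> j = 5" using assms(1) by auto
  then show ?thesis
  proof (elim disjE)
    assume j: "j = 0"
    show ?thesis using cc_of[OF assms(2)[unfolded j] assms(3) cb_dirs(2) cb_dirs(3)] j
      by (simp add: algebra_simps) 
  next
    assume j: "j = 1"
    show ?thesis using cc_of[OF assms(2)[unfolded j] assms(3) cb_dirs(5) cb_dirs(6)] j
      by (simp add: algebra_simps) 
  next
    assume j: "j = 2"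
    show ?thesis using cc_of[OF assms(2)[unfolded j] assms(3) cb_dirs(8) cb_dirs(9)] j
      by (simp add: algebra_simps numeral_eq_Suc) 
  next
    assume j: "j = 3"
    show ?thesis using cc_of[OF assms(2)[unfolded j] assms(3) cb_dirs(11) cb_dirs(12)] j
      by (simp add: algebra_simps numeral_eq_Suc) 
  next
    assume j: "j = 4"
    show ?thesis using cc_of[OF assms(2)[unfolded j] assms(3) cb_dirs(14) cb_dirs(15)] j
      by (simp add: algebra_simps numeral_eq_Suc) 
  next
    assume j: "j = 5"
    show ?thesis using cc_of[OF assms(2)[unfolded j] assms(3) cb_dirs(17) cb_dirs(18)] j
      by (simp add: algebra_simps numeral_eq_Suc) 
  qed
qed

lemma cone_disj:
  assumes "i < 6" "j < 6" "in_cone (cb i) u v" "in_cone (cb j) u v"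
  shows "i = j"
proof -
  obtain x1 x2 where xx: "v - u = (x1, x2)" by (cases "v - u") auto
  have "cc i x2 (sqrt 3 * x1)" "cc j x2 (sqrt 3 * x1)" using cone_cc assms xx by auto
  then show ?thesis using six_cases[OF assms(1)] six_cases[OF assms(2)]
    by (auto simp: numeral_eq_Suc)
qed

lemma cone_sym:
  assumes "in_cone (pos_bis i) v u"
  shows "in_cone (neg_bis i) u v"
proof -
  have e: "neg_bis i - pi/6 = pi + (pos_bis i - pi/6)" "neg_bis i + pi/6 = pi + (pos_bis i + pi/6)"
    by (simp_all add: neg_bis_def pos_bis_def field_simps)
  have m: "v - u = - (u - v)" by simp
  show ?thesis using assms unfolding in_cone_iff e dir_shift m cross_lin1 by auto
qed

lemma cone_convex:
  assumes "in_cone b u v" "in_cone b u w" "p - u = al *\<^sub>R (v - u) + be *\<^sub>R (w - u)"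
    "al \<ge> 0" "be \<ge> 0" "al > 0 \<or> be > 0"
  shows "in_cone b u p"
proof -
  let ?L = "dir (b - pi/6)" and ?U = "dir (b + pi/6)"
  have v: "cross ?L (v - u) \<ge> 0" "cross (v - u) ?U > 0" and w: "cross ?L (w - u) \<ge> 0" "cross (w - u) ?U > 0"
    using assms(1,2) by (auto simp: in_cone_iff)
  have "cross ?L (p - u) = al * cross ?L (v - u) + be * cross ?L (w - u)"
    unfolding assms(3) cross_lin1 by simp
  also have "\<dots> \<ge> 0" using v w assms(4,5) by simp
  finally have 1: "cross ?L (p - u) \<ge> 0" .
  have "cross (p - u) ?U = al * cross (v - u) ?U + be * cross (w - u) ?U"
    unfolding assms(3) cross_lin1 by simp
  also have "\<dots> > 0" using v w assms(4,5,6)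
    by (smt (verit) mult_pos_pos mult_nonneg_nonneg)
  finally have 2: "cross (p - u) ?U > 0" .
  have "p \<noteq> u" using 2 by (auto simp: cross_def)
  then show ?thesis using 1 2 by (simp add: in_cone_iff)
qed

lemma gp_conc:
  assumes "\<forall>k<(3::nat). cross y (dir (real k * pi / 3)) \<noteq> 0" "y = (y1, y2)"
  shows "y2 \<noteq> 0 \<and> y2 \<noteq> sqrt 3 * y1 \<and> y2 \<noteq> - sqrt 3 * y1"
proof -
  have e: "real 2 * pi / 3 = pi - pi/3" by (simp add: field_simps)
  have d2: "dir (real 2 * pi / 3) = (-1/2, sqrt 3/2)"
    unfolding e dir_shift dir_base by simp
  have d1: "dir (real 1 * pi / 3) = (1/2, sqrt 3/2)" using dir_base by simp
  have d0: "dir (real 0 * pi / 3) = (1, 0)" using dir_base by simp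
  have "cross y (dir (real 0 * pi / 3)) \<noteq> 0" "cross y (dir (real 1 * pi / 3)) \<noteq> 0"
    "cross y (dir (real 2 * pi / 3)) \<noteq> 0" using assms(1)[rule_format, of 0] assms(1)[rule_format, of 1]
      assms(1)[rule_format, of 2] by (simp_all only: numeral_less_iff zero_less_numeral one_less_numeral_iff semiring_norm) simp_all
  then have "cross (y1,y2) (1, 0) \<noteq> 0" "cross (y1,y2) (1/2, sqrt 3/2) \<noteq> 0" "cross (y1,y2) (-1/2, sqrt 3/2) \<noteq> 0"
    unfolding d0 d1 d2 assms(2) by auto
  then show ?thesis by (auto simp: cross_def field_simps)
qed

lemma dp_of: "dotp (y1, y2) (dir b) = 0 \<Longrightarrow> dir b = (d1, d2) \<Longrightarrow> y1*d1 + y2*d2 = 0"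
  by (simp add: dotp_def)

lemma proj_inj:
  assumes "j < 6" "\<forall>k<(3::nat). cross (w - v) (dir (real k * pi / 3)) \<noteq> 0"
    "proj (cb j) u v = proj (cb j) u w"
  shows False
proof -
  obtain y1 y2 where yy: "w - v = (y1, y2)" by (cases "w - v") auto
  have g: "y2 \<noteq> 0 \<and> y2 \<noteq> sqrt 3 * y1 \<and> y2 \<noteq> - sqrt 3 * y1" using gp_conc assms(2) yy by blast
  have "dotp (w - u) (dir (cb j)) - dotp (v - u) (dir (cb j)) = dotp (w - v) (dir (cb j))"
    by (simp add: dotp_def algebra_simps)
  then have "dotp (w - v) (dir (cb j)) = 0" using assms(3) by (simp add: proj_def)
  then have d: "dotp (y1, y2) (dir (cb j)) = 0" using yy by simp
  have "j = 0 \<or> j = 1 \<or> j = 2 \<or> j = 3 \<or> j = 4 \<or> j = 5" using assms(1) by auto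
  then show False
  proof (elim disjE)
    assume j: "j = 0" show False using dp_of[OF d[unfolded j] cb_dirs(1)] g by (simp add: algebra_simps)
  next
    assume j: "j = 1" show False using dp_of[OF d[unfolded j] cb_dirs(4)] g by (simp add: algebra_simps)
  next
    assume j: "j = 2" show False using dp_of[OF d[unfolded j] cb_dirs(7)] g by (simp add: algebra_simps)
  next
    assume j: "j = 3" show False using dp_of[OF d[unfolded j] cb_dirs(10)] g by (simp add: algebra_simps)
  next
    assume j: "j = 4" show False using dp_of[OF d[unfolded j] cb_dirs(13)] g by (simp add: algebra_simps)
  next
    assume j: "j = 5" show False using dp_of[OF d[unfolded j] cb_dirs(16)] g by (simp add: algebra_simps)
  qed
qed

lemma cramer: "cross a b *\<^sub>R x = cross x b *\<^sub>R a + cross a x *\<^sub>R b"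
  by (cases a, cases b, cases x) (simp add: cross_def algebra_simps)

lemma cross_self: "cross x x = 0" by (simp add: cross_def)
lemma cross_anti: "cross x y = - cross y x" by (simp add: cross_def)

lemma cross0_collinear:
  assumes "cross (x - u) (y - u) = 0"
  shows "collinear {u, x, y}"
proof -
  have s: "{u, x, y} = {x, u, y}" by auto
  obtain a1 a2 where a: "x - u = (a1, a2)" by (cases "x - u") auto
  obtain b1 b2 where b: "y - u = (b1, b2)" by (cases "y - u") auto
  have c: "a1 * b2 = a2 * b1" using assms a b by (simp add: cross_def)
  have "x - u = 0 \<or> y - u = 0 \<or> (\<exists>c. y - u = c *\<^sub>R (x - u))"
  proof (cases "a1 = 0")
    case True
    show ?thesis
    proof (cases "a2 = 0")
      case True then show ?thesis using \<open>a1 = 0\<close> a by (simp add: zero_prod_def)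
    next
      case False
      then have "b1 = 0" using c \<open>a1 = 0\<close> by simp
      then have "y - u = (b2/a2) *\<^sub>R (x - u)" using a b \<open>a1 = 0\<close> False by simp
      then show ?thesis by blast
    qed
  next
    case False
    have "b2 = (b1/a1) * a2" using c False by (simp add: field_simps)
    then have "y - u = (b1/a1) *\<^sub>R (x - u)" using a b False by simp
    then show ?thesis by blast
  qed
  then have "collinear {0, x - u, y - u}" by (simp add: collinear_lemma)
  then show ?thesis unfolding s by (subst collinear_3) auto
qed

lemma inside_conn:
  assumes "connected C" "C \<inter> Bd = {}" "x \<in> C" "y \<in> C" "x \<in> inside Bd"
  shows "y \<in> inside Bd"
proof -
  have "connected_component (- Bd) x y" unfolding connected_component_def
    using assms by blast
  then have "connected_component_set (- Bd) y = connected_component_set (- Bd) x"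
    by (simp add: connected_component_eq)
  then show ?thesis using assms unfolding inside_def by auto
qed

lemma pos_comb: "(0::real) \<le> s \<Longrightarrow> 0 \<le> t \<Longrightarrow> s + t = 1 \<Longrightarrow> 0 < A \<Longrightarrow> 0 < B \<Longrightarrow> 0 < s*A + t*B"
  by (smt (verit) mult_pos_pos mult_nonneg_nonneg)

lemma conv_halves:
  "convex {y. 0 < cross a (y - u)}" "convex {y. 0 < cross (y - u) b}"
  "convex {y. cross a (y - u) < 0}" "convex {y. cross (y - u) b < 0}"
proof -
  have e: "s *\<^sub>R y + t *\<^sub>R z - u = s *\<^sub>R (y - u) + t *\<^sub>R (z - u)" if "s + t = 1" for s t :: real and y z :: pt
  proof -
    have "u = s *\<^sub>R u + t *\<^sub>R u" using that by (metis scaleR_add_left scaleR_one)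
    then show ?thesis by (simp add: algebra_simps)
  qed
  show "convex {y. 0 < cross a (y - u)}"
  proof (rule convexI)
    fix y z s t assume h: "y \<in> {y. 0 < cross a (y - u)}" "z \<in> {y. 0 < cross a (y - u)}" "0 \<le> (s::real)" "0 \<le> t" "s + t = 1"
    have "0 < s * (cross a (y - u)) + t * (cross a (z - u))" using h by (intro pos_comb) auto
    moreover have "cross a (s *\<^sub>R y + t *\<^sub>R z - u) = s * (cross a (y - u)) + t * (cross a (z - u))"
      by (simp only: e[OF h(5)] cross_lin1)
    ultimately show "s *\<^sub>R y + t *\<^sub>R z \<in> {y. 0 < cross a (y - u)}" by simp
  qed
  show "convex {y. 0 < cross (y - u) b}"
  proof (rule convexI)
    fix y z s t assume h: "y \<in> {y. 0 < cross (y - u) b}" "z \<in> {y. 0 < cross (y - u) b}" "0 \<le> (s::real)" "0 \<le> t" "s + t = 1"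
    have "0 < s * (cross (y - u) b) + t * (cross (z - u) b)" using h by (intro pos_comb) auto
    moreover have "cross (s *\<^sub>R y + t *\<^sub>R z - u) b = s * (cross (y - u) b) + t * (cross (z - u) b)"
      by (simp only: e[OF h(5)] cross_lin1)
    ultimately show "s *\<^sub>R y + t *\<^sub>R z \<in> {y. 0 < cross (y - u) b}" by simp
  qed
  show "convex {y. cross a (y - u) < 0}"
  proof (rule convexI)
    fix y z s t assume h: "y \<in> {y. cross a (y - u) < 0}" "z \<in> {y. cross a (y - u) < 0}" "0 \<le> (s::real)" "0 \<le> t" "s + t = 1"
    have "0 < s * (- cross a (y - u)) + t * (- cross a (z - u))" using h by (intro pos_comb) auto
    moreover have "cross a (s *\<^sub>R y + t *\<^sub>R z - u) = s * (cross a (y - u)) + t * (cross a (z - u))"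
      by (simp only: e[OF h(5)] cross_lin1)
    ultimately show "s *\<^sub>R y + t *\<^sub>R z \<in> {y. cross a (y - u) < 0}" by simp
  qed
  show "convex {y. cross (y - u) b < 0}"
  proof (rule convexI)
    fix y z s t assume h: "y \<in> {y. cross (y - u) b < 0}" "z \<in> {y. cross (y - u) b < 0}" "0 \<le> (s::real)" "0 \<le> t" "s + t = 1"
    have "0 < s * (- cross (y - u) b) + t * (- cross (z - u) b)" using h by (intro pos_comb) auto
    moreover have "cross (s *\<^sub>R y + t *\<^sub>R z - u) b = s * (cross (y - u) b) + t * (cross (z - u) b)"
      by (simp only: e[OF h(5)] cross_lin1)
    ultimately show "s *\<^sub>R y + t *\<^sub>R z \<in> {y. cross (y - u) b < 0}" by simp
  qed
qed

lemma dist_add: "dist u (u + x) = norm (x::pt)"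
  by (simp add: dist_norm)

definition ssI :: "pt set \<Rightarrow> pt \<Rightarrow> pt \<Rightarrow> pt \<Rightarrow> bool" where
  "ssI I u v w \<longleftrightarrow> (\<exists>e>0. \<forall>s t. 0 \<le> s \<and> 0 \<le> t \<and> s + t \<le> e \<longrightarrow> u + s *\<^sub>R (v - u) + t *\<^sub>R (w - u) \<notin> I)"

lemma tri_ball:
  fixes u v w :: pt
  assumes "rho > 0"
  shows "\<exists>e>0. \<forall>s t. 0 \<le> s \<and> 0 \<le> t \<and> s + t \<le> e \<longrightarrow> u + s *\<^sub>R (v - u) + t *\<^sub>R (w - u) \<in> ball u rho"
proof -
  define M where "M = norm (v - u) + norm (w - u) + 1"
  have M: "M \<ge> 1" unfolding M_def by simp
  define e where "e = rho / (2 * M)"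
  have e0: "e > 0" unfolding e_def using assms M by simp
  have "u + s *\<^sub>R (v - u) + t *\<^sub>R (w - u) \<in> ball u rho" if st: "0 \<le> s" "0 \<le> t" "s + t \<le> e" for s t
  proof -
    have "norm (s *\<^sub>R (v - u) + t *\<^sub>R (w - u)) \<le> s * norm (v - u) + t * norm (w - u)"
    proof -
      have "norm (s *\<^sub>R (v - u) + t *\<^sub>R (w - u)) \<le> norm (s *\<^sub>R (v - u)) + norm (t *\<^sub>R (w - u))"
        by (rule norm_triangle_ineq)
      also have "\<dots> = s * norm (v - u) + t * norm (w - u)" using st by simp
      finally show ?thesis .
    qed
    also have "\<dots> \<le> s * M + t * M" unfolding M_def using st
      by (intro add_mono mult_left_mono) auto
    also have "\<dots> = (s + t) * M" by (simp add: algebra_simps)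
    also have "\<dots> \<le> e * M" using st M by (intro mult_right_mono) auto
    also have "\<dots> = rho / 2" unfolding e_def using M by (simp add: field_simps)
    also have "\<dots> < rho" using assms by simp
    finally show ?thesis by (simp only: mem_ball add.assoc dist_add)
  qed
  then show ?thesis using e0 by blast
qed

lemma vis_pt:
  fixes u v :: pt
  assumes "rho > 0" "closed_segment u v \<inter> I = {}"
  shows "\<exists>s>0. u + s *\<^sub>R (v - u) \<in> ball u rho \<and> u + s *\<^sub>R (v - u) \<notin> I"
proof -
  define n where "n = norm (v - u)"
  have n0: "n \<ge> 0" unfolding n_def by simp
  define c where "c = rho / (2 * (n + 1))"
  have c0: "c > 0" unfolding c_def using assms n0 by simp
  define s where "s = min 1 c"
  have s0: "s > 0" "s \<le> 1" "s \<le> c" unfolding s_def using c0 by auto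
  have "norm (s *\<^sub>R (v - u)) = s * n" using s0 n_def by simp
  also have "\<dots> \<le> c * n" using s0 n0 by (intro mult_right_mono) auto
  also have "\<dots> < c * (2 * (n + 1))" using c0 n0 by (intro mult_strict_left_mono) auto
  also have "\<dots> = rho" unfolding c_def using n0 by simp
  finally have b: "u + s *\<^sub>R (v - u) \<in> ball u rho" by (simp add: dist_norm)
  have "u + s *\<^sub>R (v - u) \<in> closed_segment u v" unfolding in_segment using s0
    by (intro exI[of _ s]) (simp add: algebra_simps)
  then show ?thesis using assms b s0 by blast
qed

lemma alg:
  assumes ab: "cross a b > 0" and av: "cross a v \<le> 0" and aw: "cross a w > 0" and wb: "cross w b \<le> 0"
    and st: "s \<ge> 0" "t \<ge> 0" and ax: "cross a (s *\<^sub>R v + t *\<^sub>R w) > 0" and xb: "cross (s *\<^sub>R v + t *\<^sub>R w) b > 0"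
  shows "\<exists>al be. al \<ge> 0 \<and> be \<ge> 0 \<and> (al > 0 \<or> be > 0) \<and> a = al *\<^sub>R v + be *\<^sub>R w"
proof -
  define x where "x = s *\<^sub>R v + t *\<^sub>R w"
  have cr: "cross a b *\<^sub>R x = cross x b *\<^sub>R a + cross a x *\<^sub>R b" by (rule cramer)
  have "cross a b * cross x w = cross (cross a b *\<^sub>R x) w" by (simp add: cross_lin1)
  also have "\<dots> = cross x b * cross a w + cross a x * cross b w" unfolding cr by (simp add: cross_lin1)
  finally have id: "cross a b * cross x w = cross x b * cross a w + cross a x * cross b w" .
  have "cross b w \<ge> 0" using wb cross_anti[of b w] by simp
  then have "cross x b * cross a w + cross a x * cross b w > 0"
    using ax xb aw unfolding x_def by (smt (verit) mult_pos_pos mult_nonneg_nonneg)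
  then have "cross a b * cross x w > 0" using id by simp
  then have xw: "cross x w > 0" using ab by (simp add: zero_less_mult_iff)
  have "cross x w = s * cross v w" unfolding x_def by (simp add: cross_lin1 cross_self)
  then have c0: "cross v w > 0" using xw st by (smt (verit) mult_nonneg_nonpos)
  define c where "c = cross v w"
  have cr2: "c *\<^sub>R a = cross a w *\<^sub>R v + cross v a *\<^sub>R w" unfolding c_def by (rule cramer)
  have "a = (1/c) *\<^sub>R (c *\<^sub>R a)" using c0 c_def by simp
  also have "\<dots> = (cross a w / c) *\<^sub>R v + (cross v a / c) *\<^sub>R w" unfolding cr2
    by (simp add: scaleR_add_right)
  finally have eq: "a = (cross a w / c) *\<^sub>R v + (cross v a / c) *\<^sub>R w" .
  have pos: "cross a w / c > 0" using aw c0 c_def by simp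
  have nn: "cross v a / c \<ge> 0"
  proof -
    have "cross v a \<ge> 0" using av cross_anti[of v a] by linarith
    moreover have "c > 0" using c0 c_def by simp
    ultimately show ?thesis by (rule divide_nonneg_pos)
  qed
  show ?thesis
  proof (intro exI conjI)
    show "cross a w / c \<ge> 0" using pos by simp
    show "cross v a / c \<ge> 0" by (rule nn)
    show "cross a w / c > 0 \<or> cross v a / c > 0" using pos by simp
    show "a = (cross a w / c) *\<^sub>R v + (cross v a / c) *\<^sub>R w" by (rule eq)
  qed
qed

lemma seg_pt: "0 \<le> l \<Longrightarrow> l \<le> 1 \<Longrightarrow> u + l *\<^sub>R (p - u) \<in> closed_segment u (p::pt)"
  unfolding in_segment by (intro exI[of _ l]) (simp add: algebra_simps)

lemma seg_pt_inv: "y \<in> closed_segment u (p::pt) \<Longrightarrow> \<exists>l. 0 \<le> l \<and> l \<le> 1 \<and> y - u = l *\<^sub>R (p - u)"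
  unfolding in_segment by (auto simp: algebra_simps)

lemma core:
  fixes u p q :: pt and Bd :: "pt set" and r :: real and V :: "pt set"
  assumes r: "r > 0"
    and loc: "ball u r \<inter> Bd \<subseteq> closed_segment u p \<union> closed_segment u q"
    and segp: "closed_segment u p \<subseteq> Bd" and segq: "closed_segment u q \<subseteq> Bd"
    and orient: "cross (p - u) (q - u) > 0"
    and gpp: "\<forall>v\<in>V. v \<noteq> u \<longrightarrow> cross (p - u) (v - u) = 0 \<longrightarrow> v = p"
    and gpq: "\<forall>v\<in>V. v \<noteq> u \<longrightarrow> cross (v - u) (q - u) = 0 \<longrightarrow> v = q"
  shows "\<exists>X1 X2. (\<forall>v\<in>X1. \<forall>w\<in>X1. ssI (inside Bd) u v w) \<and> (\<forall>v\<in>X2. \<forall>w\<in>X2. ssI (inside Bd) u v w) \<and>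
     (\<forall>v\<in>V. v \<noteq> u \<longrightarrow> closed_segment u v \<inter> inside Bd = {} \<longrightarrow> v \<in> X1 \<union> X2) \<and>
     (\<forall>v\<in>V. \<forall>w\<in>V. v \<noteq> u \<longrightarrow> w \<noteq> u \<longrightarrow> closed_segment u v \<inter> inside Bd = {} \<longrightarrow>
        closed_segment u w \<inter> inside Bd = {} \<longrightarrow> \<not> ssI (inside Bd) u v w \<longrightarrow>
         (\<exists>al be. al \<ge> 0 \<and> be \<ge> 0 \<and> (al > 0 \<or> be > 0) \<and> p - u = al *\<^sub>R (v - u) + be *\<^sub>R (w - u)))"
proof -
  define I where "I = inside Bd"
  have IB: "I \<inter> Bd = {}" unfolding I_def by simp
  define a where "a = p - u"
  define b where "b = q - u"
  define k where "k = cross a b"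
  have k0: "k > 0" using orient unfolding k_def a_def b_def .
  have a0: "a \<noteq> 0" using k0 unfolding k_def by (auto simp: cross_def)
  have b0: "b \<noteq> 0" using k0 unfolding k_def by (auto simp: cross_def)
  define rho where "rho = min r (min (norm a) (norm b))"
  have rho0: "rho > 0" unfolding rho_def using r a0 b0 by simp
  have rhoa: "rho \<le> norm a" "rho \<le> norm b" "rho \<le> r" unfolding rho_def by auto
  have inball: "norm (y - u) < rho" if "y \<in> ball u rho" for y
    using that by (simp add: dist_norm norm_minus_commute)
  have L2: "y \<in> Bd" if y: "y \<in> ball u rho" "cross a (y - u) \<ge> 0" "cross (y - u) b \<ge> 0"
    "\<not> (cross a (y - u) > 0 \<and> cross (y - u) b > 0)" for y
  proof -
    define x where "x = y - u"
    have cr: "k *\<^sub>R x = cross x b *\<^sub>R a + cross a x *\<^sub>R b" unfolding k_def by (rule cramer)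
    have nx: "norm x < rho" using inball[OF y(1)] x_def by simp
    show ?thesis
    proof (cases "cross a x = 0")
      case True
      define l where "l = cross x b / k"
      have l0: "l \<ge> 0" unfolding l_def using y(3) k0 x_def by simp
      have "x = (1/k) *\<^sub>R (k *\<^sub>R x)" using k0 by simp
      also have "\<dots> = l *\<^sub>R a" unfolding cr True l_def by simp
      finally have xl: "x = l *\<^sub>R a" .
      have "l * norm a < norm a" using nx rhoa xl l0 by simp
      then have "l \<le> 1" using a0 by simp
      then have "u + l *\<^sub>R (p - u) \<in> closed_segment u p" by (rule seg_pt[OF l0])
      moreover have "y = u + l *\<^sub>R (p - u)" using xl x_def a_def by (simp add: algebra_simps)
      ultimately show ?thesis using segp by auto
    next
      case False
      then have F: "cross x b = 0" using y(2,3,4) x_def by auto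
      define l where "l = cross a x / k"
      have l0: "l \<ge> 0" unfolding l_def using y(2) k0 x_def by simp
      have "x = (1/k) *\<^sub>R (k *\<^sub>R x)" using k0 by simp
      also have "\<dots> = l *\<^sub>R b" unfolding cr F l_def by simp
      finally have xl: "x = l *\<^sub>R b" .
      have "l * norm b < norm b" using nx rhoa xl l0 by simp
      then have "l \<le> 1" using b0 by simp
      then have "u + l *\<^sub>R (q - u) \<in> closed_segment u q" by (rule seg_pt[OF l0])
      moreover have "y = u + l *\<^sub>R (q - u)" using xl x_def b_def by (simp add: algebra_simps)
      ultimately show ?thesis using segq by auto
    qed
  qed
  have L3: "cross a (y - u) \<ge> 0 \<and> cross (y - u) b \<ge> 0 \<and> \<not> (cross a (y - u) > 0 \<and> cross (y - u) b > 0)"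
    if y: "y \<in> ball u rho" "y \<in> Bd" for y
  proof -
    have "y \<in> ball u r" using y(1) rhoa by auto
    then have "y \<in> closed_segment u p \<union> closed_segment u q" using loc y(2) by auto
    then show ?thesis
    proof
      assume "y \<in> closed_segment u p"
      then obtain l where l: "0 \<le> l" "y - u = l *\<^sub>R a" unfolding a_def using seg_pt_inv by blast
      show ?thesis unfolding l(2) using l(1) k0 unfolding k_def by (simp add: cross_lin1 cross_self)
    next
      assume "y \<in> closed_segment u q"
      then obtain l where l: "0 \<le> l" "y - u = l *\<^sub>R b" unfolding b_def using seg_pt_inv by blast
      show ?thesis unfolding l(2) using l(1) k0 unfolding k_def by (simp add: cross_lin1 cross_self)
    qed
  qed
  define K1 where "K1 = ball u rho \<inter> {y. 0 < cross a (y - u)} \<inter> {y. 0 < cross (y - u) b}"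
  define H1 where "H1 = ball u rho \<inter> {y. cross a (y - u) < 0}"
  define H2 where "H2 = ball u rho \<inter> {y. cross (y - u) b < 0}"
  have K1B: "K1 \<inter> Bd = {}" using L3 unfolding K1_def by force
  have HB: "(H1 \<union> H2) \<inter> Bd = {}" using L3 unfolding H1_def H2_def by force
  have cK: "connected K1" unfolding K1_def
    by (intro convex_connected convex_Int conv_halves convex_ball)
  define nab where "nab = norm a + norm b"
  have nab0: "nab > 0" unfolding nab_def using a0 by (simp add: add_pos_nonneg)
  define de where "de = rho / (2 * nab)"
  have de0: "de > 0" unfolding de_def using rho0 nab0 by simp
  have nde: "norm (de *\<^sub>R (a + b)) < rho"
  proof -
    have "norm (de *\<^sub>R (a + b)) \<le> de * nab" using de0 unfolding nab_def by (simp add: norm_triangle_ineq)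
    also have "\<dots> = rho / 2" unfolding de_def using nab0 by simp
    finally show ?thesis using rho0 by simp
  qed
  define c0 where "c0 = u + de *\<^sub>R (a + b)"
  define w0 where "w0 = u + (- de) *\<^sub>R (a + b)"
  have c0b: "c0 \<in> ball u rho" unfolding c0_def using nde by (simp only: mem_ball dist_add)
  have w0b: "w0 \<in> ball u rho" unfolding w0_def using nde by (simp only: mem_ball dist_add norm_scaleR abs_minus_cancel)
  have c0K: "c0 \<in> K1" unfolding K1_def using c0b de0 k0 unfolding c0_def k_def
    by (simp add: cross_lin1 cross_self)
  have w0H: "w0 \<in> H1" "w0 \<in> H2" unfolding H1_def H2_def using w0b de0 k0 unfolding w0_def k_def
    by (simp_all add: cross_lin1 cross_self)
  have cH: "connected (H1 \<union> H2)"
  proof (rule connected_Un)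
    show "connected H1" unfolding H1_def by (intro convex_connected convex_Int conv_halves convex_ball)
    show "connected H2" unfolding H2_def by (intro convex_connected convex_Int conv_halves convex_ball)
    show "H1 \<inter> H2 \<noteq> {}" using w0H by blast
  qed
  have FK1: "K1 \<subseteq> I" if "c0 \<in> I"
    using inside_conn[OF cK K1B c0K _ that[unfolded I_def]] unfolding I_def by blast
  have FK2: "K1 \<inter> I = {}" if "c0 \<notin> I"
    using inside_conn[OF cK K1B _ c0K] that unfolding I_def by blast
  have FH1: "H1 \<union> H2 \<subseteq> I" if "w0 \<in> I"
    using inside_conn[OF cH HB _ _ that[unfolded I_def]] w0H unfolding I_def by blast
  have FH2: "(H1 \<union> H2) \<inter> I = {}" if "w0 \<notin> I"
    using inside_conn[OF cH HB _ _] w0H that unfolding I_def by blast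
  have Fball: "y \<in> K1 \<union> H1 \<union> H2" if "y \<in> ball u rho" "y \<in> I" for y
  proof (rule ccontr)
    assume "y \<notin> K1 \<union> H1 \<union> H2"
    then have "cross a (y - u) \<ge> 0" "cross (y - u) b \<ge> 0" "\<not> (cross a (y - u) > 0 \<and> cross (y - u) b > 0)"
      using that(1) unfolding K1_def H1_def H2_def by auto
    then have "y \<in> Bd" using L2 that(1) by blast
    then show False using IB that(2) by blast
  qed
  have crit: "ssI I u v w" if "\<And>s t. 0 \<le> s \<Longrightarrow> 0 \<le> t \<Longrightarrow> u + s *\<^sub>R (v - u) + t *\<^sub>R (w - u) \<in> ball u rho \<Longrightarrow>
      u + s *\<^sub>R (v - u) + t *\<^sub>R (w - u) \<notin> I" for v w
  proof -
    obtain e where e: "e > 0" "\<forall>s t. 0 \<le> s \<and> 0 \<le> t \<and> s + t \<le> e \<longrightarrow> u + s *\<^sub>R (v - u) + t *\<^sub>R (w - u) \<in> ball u rho"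
      using tri_ball[OF rho0] by blast
    show ?thesis unfolding ssI_def using e that by blast
  qed
  have nss: "\<exists>s t. 0 \<le> s \<and> 0 \<le> t \<and> u + s *\<^sub>R (v - u) + t *\<^sub>R (w - u) \<in> ball u rho \<and>
      u + s *\<^sub>R (v - u) + t *\<^sub>R (w - u) \<in> I" if "\<not> ssI I u v w" for v w
    using crit that by blast
  have diff: "u + s *\<^sub>R (v - u) + t *\<^sub>R (w - u) - u = s *\<^sub>R (v - u) + t *\<^sub>R (w - u)" for s t v w
    by simp
  have vis: "\<exists>s>0. u + s *\<^sub>R (v - u) \<in> ball u rho \<and> u + s *\<^sub>R (v - u) \<notin> I"
    if "closed_segment u v \<inter> I = {}" for v
    using vis_pt[OF rho0 that] .
  have diff1: "u + s *\<^sub>R (v - u) - u = s *\<^sub>R (v - u)" for s v by simp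
  show ?thesis
  proof (cases "c0 \<in> I")
    case cI: True
    show ?thesis
    proof (cases "w0 \<in> I")
      case wI: True
      (* both sectors inside: only p and q visible *)
      define X1 where "X1 = {p}"
      define X2 where "X2 = {q}"
      have ssp: "ssI I u x x" if "x = p \<or> x = q" for x
        unfolding ssI_def
      proof (intro exI[of _ 1] conjI allI impI)
        fix s t :: real assume st: "0 \<le> s \<and> 0 \<le> t \<and> s + t \<le> 1"
        have eq: "u + s *\<^sub>R (x - u) + t *\<^sub>R (x - u) = u + (s + t) *\<^sub>R (x - u)" by (simp add: algebra_simps)
        have "u + (s + t) *\<^sub>R (x - u) \<in> closed_segment u x" using st by (intro seg_pt) auto
        then have "u + (s + t) *\<^sub>R (x - u) \<in> Bd" using that segp segq by auto
        then have "u + s *\<^sub>R (x - u) + t *\<^sub>R (x - u) \<in> Bd" unfolding eq .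
        then show "u + s *\<^sub>R (x - u) + t *\<^sub>R (x - u) \<notin> I" using IB by blast
      qed simp
      have cov: "v = p \<or> v = q" if v: "v \<in> V" "v \<noteq> u" "closed_segment u v \<inter> I = {}" for v
      proof -
        obtain s where s: "s > 0" "u + s *\<^sub>R (v - u) \<in> ball u rho" "u + s *\<^sub>R (v - u) \<notin> I"
          using vis[OF v(3)] by blast
        have "u + s *\<^sub>R (v - u) \<notin> K1" "u + s *\<^sub>R (v - u) \<notin> H1" "u + s *\<^sub>R (v - u) \<notin> H2"
          using s(3) FK1[OF cI] FH1[OF wI] by auto
        then have "\<not> (0 < s * cross a (v - u) \<and> 0 < s * cross (v - u) b)" "\<not> s * cross a (v - u) < 0"
          "\<not> s * cross (v - u) b < 0"
          using s(2) unfolding K1_def H1_def H2_def diff1 by (auto simp: cross_lin1)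
        then have "cross a (v - u) = 0 \<or> cross (v - u) b = 0" using s(1)
          by (auto simp: zero_less_mult_iff mult_less_0_iff)
        then show ?thesis using gpp gpq v unfolding a_def b_def by blast
      qed
      show ?thesis
      proof (rule exI[of _ X1], rule exI[of _ X2], intro conjI ballI impI)
        show "ssI (inside Bd) u v w" if "v \<in> X1" "w \<in> X1" for v w using that ssp unfolding X1_def I_def by auto
        show "ssI (inside Bd) u v w" if "v \<in> X2" "w \<in> X2" for v w using that ssp unfolding X2_def I_def by auto
        show "v \<in> X1 \<union> X2" if "v \<in> V" "v \<noteq> u" "closed_segment u v \<inter> inside Bd = {}" for v
          using cov[of v] that unfolding X1_def X2_def I_def by blast
        show "\<exists>al be. al \<ge> 0 \<and> be \<ge> 0 \<and> (al > 0 \<or> be > 0) \<and> p - u = al *\<^sub>R (v - u) + be *\<^sub>R (w - u)"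
          if "v \<in> V" "w \<in> V" "v \<noteq> u" "w \<noteq> u" "closed_segment u v \<inter> inside Bd = {}"
            "closed_segment u w \<inter> inside Bd = {}" "\<not> ssI (inside Bd) u v w" for v w
        proof -
          have vw: "v = p \<or> v = q" "w = p \<or> w = q" using cov[of v] cov[of w] that unfolding I_def by blast+
          have "v \<noteq> w"
          proof
            assume "v = w"
            then have "ssI I u v w" using ssp[of v] vw by blast
            then show False using that(7) unfolding I_def by blast
          qed
          then have "v = p \<or> w = p" using vw by auto
          then show ?thesis
          proof
            assume "v = p" then show ?thesis by (intro exI[of _ 1] exI[of _ 0]) simp
          next
            assume "w = p" then show ?thesis by (intro exI[of _ 0] exI[of _ 1]) simp
          qed
        qed
      qed
    next
      case wI: False
      define X1 where "X1 = {v. cross a (v - u) \<le> 0}"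
      define X2 where "X2 = {v. cross (v - u) b \<le> 0}"
      have inI: "y \<in> K1" if "y \<in> ball u rho" "y \<in> I" for y
        using Fball[OF that] FH2[OF wI] that by blast
      have c1: "ssI I u v w" if "v \<in> X1" "w \<in> X1" for v w
      proof (rule crit)
        fix s t :: real assume st: "0 \<le> s" "0 \<le> t" and yb: "u + s *\<^sub>R (v - u) + t *\<^sub>R (w - u) \<in> ball u rho"
        have "cross a (s *\<^sub>R (v - u) + t *\<^sub>R (w - u)) \<le> 0" using that st unfolding X1_def
          by (simp add: cross_lin1 mult_nonneg_nonpos add_nonpos_nonpos)
        then show "u + s *\<^sub>R (v - u) + t *\<^sub>R (w - u) \<notin> I" using inI[OF yb] unfolding K1_def diff by auto
      qed
      have c2: "ssI I u v w" if "v \<in> X2" "w \<in> X2" for v w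
      proof (rule crit)
        fix s t :: real assume st: "0 \<le> s" "0 \<le> t" and yb: "u + s *\<^sub>R (v - u) + t *\<^sub>R (w - u) \<in> ball u rho"
        have "cross (s *\<^sub>R (v - u) + t *\<^sub>R (w - u)) b \<le> 0" using that st unfolding X2_def
          by (simp add: cross_lin1 mult_nonneg_nonpos add_nonpos_nonpos)
        then show "u + s *\<^sub>R (v - u) + t *\<^sub>R (w - u) \<notin> I" using inI[OF yb] unfolding K1_def diff by auto
      qed
      have cov: "v \<in> X1 \<union> X2" if v: "closed_segment u v \<inter> I = {}" for v
      proof (rule ccontr)
        assume nv: "v \<notin> X1 \<union> X2"
        obtain s where s: "s > 0" "u + s *\<^sub>R (v - u) \<in> ball u rho" "u + s *\<^sub>R (v - u) \<notin> I"
          using vis[OF v] by blast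
        have "u + s *\<^sub>R (v - u) \<in> K1" using s nv unfolding K1_def X1_def X2_def diff1
          by (auto simp: cross_lin1)
        then show False using s(3) FK1[OF cI] by blast
      qed
      show ?thesis
      proof (rule exI[of _ X1], rule exI[of _ X2], intro conjI ballI impI)
        show "ssI (inside Bd) u v w" if "v \<in> X1" "w \<in> X1" for v w using c1 that unfolding I_def by auto
        show "ssI (inside Bd) u v w" if "v \<in> X2" "w \<in> X2" for v w using c2 that unfolding I_def by auto
        show "v \<in> X1 \<union> X2" if "v \<in> V" "v \<noteq> u" "closed_segment u v \<inter> inside Bd = {}" for v
          using cov that unfolding I_def by auto
        show "\<exists>al be. al \<ge> 0 \<and> be \<ge> 0 \<and> (al > 0 \<or> be > 0) \<and> p - u = al *\<^sub>R (v - u) + be *\<^sub>R (w - u)"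
          if H: "v \<in> V" "w \<in> V" "v \<noteq> u" "w \<noteq> u" "closed_segment u v \<inter> inside Bd = {}"
            "closed_segment u w \<inter> inside Bd = {}" "\<not> ssI (inside Bd) u v w" for v w
        proof -
          obtain s t where st: "0 \<le> s" "0 \<le> t" "u + s *\<^sub>R (v - u) + t *\<^sub>R (w - u) \<in> ball u rho"
            "u + s *\<^sub>R (v - u) + t *\<^sub>R (w - u) \<in> I" using nss H(7) unfolding I_def by blast
          have "u + s *\<^sub>R (v - u) + t *\<^sub>R (w - u) \<in> K1" using inI st by blast
          then have ax: "cross a (s *\<^sub>R (v - u) + t *\<^sub>R (w - u)) > 0"
            and xb: "cross (s *\<^sub>R (v - u) + t *\<^sub>R (w - u)) b > 0" unfolding K1_def diff by auto
          have vc: "v \<in> X1 \<union> X2" "w \<in> X1 \<union> X2" using cov H(5,6) unfolding I_def by auto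
          have ab: "cross a b > 0" using k0 k_def by simp
          show ?thesis
          proof (cases "v \<in> X1")
            case True
            have "w \<notin> X1"
            proof
              assume "w \<in> X1"
              then have "cross a (s *\<^sub>R (v - u) + t *\<^sub>R (w - u)) \<le> 0" using True st unfolding X1_def
                by (simp add: cross_lin1 mult_nonneg_nonpos add_nonpos_nonpos)
              then show False using ax by simp
            qed
            then have w2: "w \<in> X2" using vc by auto
            have "\<exists>al be. al \<ge> 0 \<and> be \<ge> 0 \<and> (al > 0 \<or> be > 0) \<and> a = al *\<^sub>R (v - u) + be *\<^sub>R (w - u)"
              by (rule alg[OF ab _ _ _ st(1,2) ax xb]) (use True \<open>w \<notin> X1\<close> w2 in \<open>auto simp: X1_def X2_def\<close>)
            then show ?thesis unfolding a_def .
          next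
            case False
            then have v2: "v \<in> X2" using vc by auto
            have "w \<in> X1"
            proof (rule ccontr)
              assume "w \<notin> X1"
              then have "w \<in> X2" using vc by auto
              then have "cross (s *\<^sub>R (v - u) + t *\<^sub>R (w - u)) b \<le> 0" using v2 st unfolding X2_def
                by (simp add: cross_lin1 mult_nonneg_nonpos add_nonpos_nonpos)
              then show False using xb by simp
            qed
            have ax': "cross a (t *\<^sub>R (w - u) + s *\<^sub>R (v - u)) > 0" using ax by (simp add: add.commute)
            have xb': "cross (t *\<^sub>R (w - u) + s *\<^sub>R (v - u)) b > 0" using xb by (simp add: add.commute)
            have "\<exists>al be. al \<ge> 0 \<and> be \<ge> 0 \<and> (al > 0 \<or> be > 0) \<and> a = al *\<^sub>R (w - u) + be *\<^sub>R (v - u)"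
              by (rule alg[OF ab _ _ _ st(2,1) ax' xb']) (use False \<open>w \<in> X1\<close> v2 in \<open>auto simp: X1_def X2_def\<close>)
            then obtain al be where "al \<ge> 0" "be \<ge> 0" "al > 0 \<or> be > 0" "a = al *\<^sub>R (w - u) + be *\<^sub>R (v - u)"
              by blast
            then show ?thesis unfolding a_def by (intro exI[of _ be] exI[of _ al]) auto
          qed
        qed
      qed
    qed
  next
    case cI: False
    show ?thesis
    proof (cases "w0 \<in> I")
      case wI: True
      define X1 where "X1 = {v. cross a (v - u) \<ge> 0 \<and> cross (v - u) b \<ge> 0}"
      have inI: "y \<in> H1 \<union> H2" if "y \<in> ball u rho" "y \<in> I" for y
        using Fball[OF that] FK2[OF cI] that by blast
      have c1: "ssI I u v w" if "v \<in> X1" "w \<in> X1" for v w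
      proof (rule crit)
        fix s t :: real assume st: "0 \<le> s" "0 \<le> t" and yb: "u + s *\<^sub>R (v - u) + t *\<^sub>R (w - u) \<in> ball u rho"
        have "cross a (s *\<^sub>R (v - u) + t *\<^sub>R (w - u)) \<ge> 0" "cross (s *\<^sub>R (v - u) + t *\<^sub>R (w - u)) b \<ge> 0"
          using that st unfolding X1_def by (simp_all add: cross_lin1)
        then show "u + s *\<^sub>R (v - u) + t *\<^sub>R (w - u) \<notin> I" using inI[OF yb] unfolding H1_def H2_def diff by auto
      qed
      have cov: "v \<in> X1" if v: "closed_segment u v \<inter> I = {}" for v
      proof (rule ccontr)
        assume nv: "v \<notin> X1"
        obtain s where s: "s > 0" "u + s *\<^sub>R (v - u) \<in> ball u rho" "u + s *\<^sub>R (v - u) \<notin> I"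
          using vis[OF v] by blast
        have "u + s *\<^sub>R (v - u) \<in> H1 \<union> H2" using s nv unfolding H1_def H2_def X1_def diff1
          by (auto simp: cross_lin1 mult_less_0_iff)
        then show False using s(3) FH1[OF wI] by blast
      qed
      show ?thesis
      proof (rule exI[of _ X1], rule exI[of _ "{}"], intro conjI ballI impI)
        show "ssI (inside Bd) u v w" if "v \<in> X1" "w \<in> X1" for v w using c1 that unfolding I_def by auto
        show "ssI (inside Bd) u v w" if "v \<in> {}" "w \<in> {}" for v w using that by auto
        show "v \<in> X1 \<union> {}" if "v \<in> V" "v \<noteq> u" "closed_segment u v \<inter> inside Bd = {}" for v
          using cov that unfolding I_def by auto
        show "\<exists>al be. al \<ge> 0 \<and> be \<ge> 0 \<and> (al > 0 \<or> be > 0) \<and> p - u = al *\<^sub>R (v - u) + be *\<^sub>R (w - u)"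
          if "v \<in> V" "w \<in> V" "v \<noteq> u" "w \<noteq> u" "closed_segment u v \<inter> inside Bd = {}"
            "closed_segment u w \<inter> inside Bd = {}" "\<not> ssI (inside Bd) u v w" for v w
          using c1 cov that unfolding I_def by blast
      qed
    next
      case wI: False
      have noI: "y \<notin> I" if "y \<in> ball u rho" for y
        using Fball[OF that] FK2[OF cI] FH2[OF wI] by blast
      have c1: "ssI I u v w" for v w
        by (rule crit) (use noI in blast)
      show ?thesis
        by (rule exI[of _ UNIV], rule exI[of _ "{}"]) (use c1 in \<open>auto simp: I_def\<close>)
    qed
  qed
qed

lemma local_struct:
  assumes sp: "simple_polygon Ob" and uin: "u \<in> set Ob"
  shows "\<exists>p q r. p \<in> set Ob \<and> q \<in> set Ob \<and> p \<noteq> u \<and> q \<noteq> u \<and> p \<noteq> q \<and> r > 0 \<and>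
    closed_segment u p \<subseteq> poly_boundary Ob \<and> closed_segment u q \<subseteq> poly_boundary Ob \<and>
    ball u r \<inter> poly_boundary Ob \<subseteq> closed_segment u p \<union> closed_segment u q"
proof -
  define n where "n = length Ob"
  have n3: "n \<ge> 3" and dist: "distinct Ob" using sp unfolding simple_polygon_def n_def by auto
  have inter: "\<And>i j. i < n \<Longrightarrow> j < n \<Longrightarrow> i \<noteq> j \<Longrightarrow> poly_edge Ob i \<inter> poly_edge Ob j =
          (if j = (i + 1) mod n then {Ob ! j} else if i = (j + 1) mod n then {Ob ! i} else {})"
    using sp unfolding simple_polygon_def n_def by blast
  obtain k where k: "k < n" "Ob ! k = u" using uin unfolding n_def by (metis in_set_conv_nth)
  define k1 where "k1 = (k + 1) mod n"
  define m where "m = (k + n - 1) mod n"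
  have k1n: "k1 < n" and mn: "m < n" unfolding k1_def m_def using n3 by auto
  have m0: "m = n - 1" if "k = 0" unfolding m_def using that n3 by simp
  have m1: "m = k - 1" if "k \<noteq> 0"
  proof -
    have "k + n - 1 = (k - 1) + n" using that by simp
    then have "m = (k - 1 + n) mod n" unfolding m_def by simp
    also have "\<dots> = (k - 1) mod n" by simp
    also have "\<dots> = k - 1" using k by simp
    finally show ?thesis .
  qed
  have mk: "(m + 1) mod n = k"
  proof (cases "k = 0")
    case True then show ?thesis using m0 n3 by simp
  next
    case False then show ?thesis using m1 k by simp
  qed
  have jm: "j = m" if "j < n" "(j + 1) mod n = k" for j
  proof (cases "j + 1 < n")
    case True then have "k = j + 1" using that by simp
    then show ?thesis using m1 by simp
  next
    case False then have "j = n - 1" using that by simp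
    then have "k = 0" using that n3 by simp
    then show ?thesis using m0 \<open>j = n - 1\<close> by simp
  qed
  have k1v: "k1 = (if k + 1 < n then k + 1 else 0)"
  proof (cases "k + 1 < n")
    case False then have "k + 1 = n" using k by linarith
    then show ?thesis unfolding k1_def by simp
  qed (simp add: k1_def)
  have k1k: "k1 \<noteq> k" using k1v n3 k by auto
  have mk': "m \<noteq> k"
  proof
    assume "m = k" then have "k1 = k" using mk unfolding k1_def by simp
    then show False using k1k by simp
  qed
  have mk1: "m \<noteq> k1"
  proof
    assume "m = k1"
    then have e: "(k1 + 1) mod n = k" using mk by simp
    show False
    proof (cases "k + 1 < n")
      case True
      then have "(k + 2) mod n = k" using e k1v by simp
      moreover have "(k + 2) mod n = (if k + 2 < n then k + 2 else 0)"
      proof (cases "k + 2 < n")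
        case False then have "k + 2 = n" using True by linarith
        then show ?thesis by simp
      qed simp
      ultimately show False using n3 by (auto split: if_splits)
    next
      case False
      then have "k1 = 0" using k1v by simp
      then have "1 mod n = k" using e by simp
      then have "k = 1" using n3 by simp
      then show False using False n3 by simp
    qed
  qed
  define p where "p = Ob ! m"
  define q where "q = Ob ! k1"
  have pin: "p \<in> set Ob" and qin: "q \<in> set Ob" unfolding p_def q_def n_def using mn k1n n_def by auto
  have ne: "Ob ! i \<noteq> Ob ! j" if "i < n" "j < n" "i \<noteq> j" for i j
    using nth_eq_iff_index_eq[OF dist, of i j] that n_def by simp
  have pu: "p \<noteq> u" unfolding p_def k(2)[symmetric] using ne mn k(1) mk' by blast
  have qu: "q \<noteq> u" unfolding q_def k(2)[symmetric] using ne k1n k(1) k1k by blast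
  have pq: "p \<noteq> q" unfolding p_def q_def using ne mn k1n mk1 by blast
  have ek: "poly_edge Ob k = closed_segment u q" unfolding poly_edge_def q_def k1_def n_def k(2)[symmetric] ..
  have em: "poly_edge Ob m = closed_segment u p"
    unfolding poly_edge_def p_def using mk n_def k(2) by (simp add: closed_segment_commute)
  have Bd: "poly_boundary Ob = (\<Union>i<n. poly_edge Ob i)" unfolding poly_boundary_def n_def ..
  define J where "J = {j. j < n \<and> j \<noteq> k \<and> j \<noteq> m}"
  define E where "E = (\<Union>j\<in>J. poly_edge Ob j)"
  have cE: "closed E" unfolding E_def J_def poly_edge_def by (intro closed_UN) auto
  have uE: "u \<notin> E"
  proof
    assume "u \<in> E"
    then obtain j where j: "j \<in> J" "u \<in> poly_edge Ob j" unfolding E_def by blast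
    have jn: "j < n" "j \<noteq> k" "j \<noteq> m" using j(1) unfolding J_def by auto
    have uk: "u \<in> poly_edge Ob k" unfolding ek by simp
    have "u \<in> poly_edge Ob k \<inter> poly_edge Ob j" using uk j by blast
    also have "\<dots> = (if j = k1 then {Ob ! j} else {})"
      using inter[OF k(1) jn(1) jn(2)[symmetric]] jm[OF jn(1)] jn(3) unfolding k1_def by auto
    finally show False using qu unfolding q_def by (auto split: if_splits)
  qed
  obtain r where r: "r > 0" "ball u r \<subseteq> - E" using cE uE open_contains_ball[of "- E"]
    by (metis ComplI open_Compl)
  have "ball u r \<inter> poly_boundary Ob \<subseteq> poly_edge Ob k \<union> poly_edge Ob m"
  proof
    fix y assume y: "y \<in> ball u r \<inter> poly_boundary Ob"
    then obtain i where i: "i < n" "y \<in> poly_edge Ob i" unfolding Bd by blast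
    have "y \<notin> E" using y r by auto
    then have "i \<notin> J" using i unfolding E_def by blast
    then have "i = k \<or> i = m" using i unfolding J_def by auto
    then show "y \<in> poly_edge Ob k \<union> poly_edge Ob m" using i by auto
  qed
  moreover have "closed_segment u q \<subseteq> poly_boundary Ob" using ek k unfolding Bd by blast
  moreover have "closed_segment u p \<subseteq> poly_boundary Ob" using em mn unfolding Bd by blast
  ultimately show ?thesis using pin qin pu qu pq r(1) unfolding ek em by blast
qed

lemma vs_1: "valid_setting V S \<Longrightarrow> \<forall>Ob\<in>S. simple_polygon Ob \<and> set Ob \<subseteq> V"
  unfolding valid_setting_def by (elim conjE) assumption
lemma vs_2: "valid_setting V S \<Longrightarrow> \<forall>v. \<forall>O1\<in>S. \<forall>O2\<in>S. v \<in> set O1 \<and> v \<in> set O2 \<longrightarrow> O1 = O2"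
  unfolding valid_setting_def by (elim conjE) assumption
lemma vs_3: "valid_setting V S \<Longrightarrow> \<forall>a\<in>V. \<forall>b\<in>V. \<forall>c\<in>V. a \<noteq> b \<and> a \<noteq> c \<and> b \<noteq> c \<longrightarrow> \<not> collinear {a, b, c}"
  unfolding valid_setting_def by (elim conjE) assumption
lemma vs_4: "valid_setting V S \<Longrightarrow> \<forall>u\<in>V. \<forall>v\<in>V. u \<noteq> v \<longrightarrow> (\<forall>k<(3::nat). cross (v - u) (dir (real k * pi / 3)) \<noteq> 0)"
  unfolding valid_setting_def by (elim conjE) assumption
lemma vs_5: "valid_setting V S \<Longrightarrow> finite V"
  unfolding valid_setting_def by (elim conjE) assumption

lemma visible_sym: "visible S u v = visible S v u"
  unfolding visible_def by (simp add: closed_segment_commute)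

lemma same_side_sym: "same_side S u v w \<Longrightarrow> same_side S u w v"
  unfolding same_side_def
proof (intro ballI impI)
  fix Ob assume H: "\<forall>Ob\<in>S. u \<in> set Ob \<longrightarrow> (\<exists>e>0. \<forall>s t. 0 \<le> s \<and> 0 \<le> t \<and> s + t \<le> e \<longrightarrow>
        u + s *\<^sub>R (v - u) + t *\<^sub>R (w - u) \<notin> inside (poly_boundary Ob))" "Ob \<in> S" "u \<in> set Ob"
  then obtain e where e: "e > 0" "\<forall>s t. 0 \<le> s \<and> 0 \<le> t \<and> s + t \<le> e \<longrightarrow>
        u + s *\<^sub>R (v - u) + t *\<^sub>R (w - u) \<notin> inside (poly_boundary Ob)" by blast
  show "\<exists>e>0. \<forall>s t. 0 \<le> s \<and> 0 \<le> t \<and> s + t \<le> e \<longrightarrow>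
        u + s *\<^sub>R (w - u) + t *\<^sub>R (v - u) \<notin> inside (poly_boundary Ob)"
  proof (intro exI[of _ e] conjI allI impI)
    fix s t :: real assume st: "0 \<le> s \<and> 0 \<le> t \<and> s + t \<le> e"
    have "u + t *\<^sub>R (v - u) + s *\<^sub>R (w - u) \<notin> inside (poly_boundary Ob)" using e(2) st by auto
    moreover have "u + t *\<^sub>R (v - u) + s *\<^sub>R (w - u) = u + s *\<^sub>R (w - u) + t *\<^sub>R (v - u)" by simp
    ultimately show "u + s *\<^sub>R (w - u) + t *\<^sub>R (v - u) \<notin> inside (poly_boundary Ob)" by simp
  qed (rule e(1))
qed

lemma ssI_same_side:
  assumes "Ob \<in> S" "u \<in> set Ob" "\<forall>Ob'\<in>S. u \<in> set Ob' \<longrightarrow> Ob' = Ob"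
  shows "same_side S u v w \<longleftrightarrow> ssI (inside (poly_boundary Ob)) u v w"
proof
  assume h: "same_side S u v w"
  show "ssI (inside (poly_boundary Ob)) u v w" unfolding ssI_def
    by (rule h[unfolded same_side_def, rule_format, OF assms(1) assms(2)])
next
  assume h: "ssI (inside (poly_boundary Ob)) u v w"
  show "same_side S u v w" unfolding same_side_def
  proof (intro ballI impI)
    fix Ob' assume "Ob' \<in> S" "u \<in> set Ob'"
    then have e: "Ob' = Ob" using assms(3) by blast
    show "\<exists>e>0. \<forall>s t. 0 \<le> s \<and> 0 \<le> t \<and> s + t \<le> e \<longrightarrow>
        u + s *\<^sub>R (v - u) + t *\<^sub>R (w - u) \<notin> inside (poly_boundary Ob')" unfolding e using h unfolding ssI_def .
  qed
qed

lemma col_eq: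
  assumes col: "\<forall>a\<in>V. \<forall>b\<in>V. \<forall>c\<in>V. a \<noteq> b \<and> a \<noteq> c \<and> b \<noteq> c \<longrightarrow> \<not> collinear {a, b, c}"
    and "u \<in> V" "v \<in> V" "w \<in> V" "v \<noteq> u" "w \<noteq> u" "cross (v - u) (w - u) = 0"
  shows "v = w"
proof (rule ccontr)
  assume "v \<noteq> w"
  moreover have "u \<noteq> v" "u \<noteq> w" using assms(5,6) by auto
  ultimately have "\<not> collinear {u, v, w}" using col[rule_format, OF assms(2) assms(3) assms(4)] by simp
  then show False using cross0_collinear[OF assms(7)] by simp
qed

lemma geo_oriented:
  fixes V :: "pt set"
  assumes col: "\<forall>a\<in>V. \<forall>b\<in>V. \<forall>c\<in>V. a \<noteq> b \<and> a \<noteq> c \<and> b \<noteq> c \<longrightarrow> \<not> collinear {a, b, c}"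
    and uV: "u \<in> V" and pV: "p \<in> V" and qV: "q \<in> V" and pu: "p \<noteq> u" and qu: "q \<noteq> u"
    and r: "r > 0"
    and loc: "ball u r \<inter> Bd \<subseteq> closed_segment u p \<union> closed_segment u q"
    and segp: "closed_segment u p \<subseteq> Bd" and segq: "closed_segment u q \<subseteq> Bd"
    and orient: "cross (p - u) (q - u) > 0"
  shows "\<exists>X1 X2. (\<forall>v\<in>X1. \<forall>w\<in>X1. ssI (inside Bd) u v w) \<and> (\<forall>v\<in>X2. \<forall>w\<in>X2. ssI (inside Bd) u v w) \<and>
     (\<forall>v\<in>V. v \<noteq> u \<longrightarrow> closed_segment u v \<inter> inside Bd = {} \<longrightarrow> v \<in> X1 \<union> X2) \<and>
     (\<forall>v\<in>V. \<forall>w\<in>V. v \<noteq> u \<longrightarrow> w \<noteq> u \<longrightarrow> closed_segment u v \<inter> inside Bd = {} \<longrightarrow>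
        closed_segment u w \<inter> inside Bd = {} \<longrightarrow> \<not> ssI (inside Bd) u v w \<longrightarrow>
         (\<exists>al be. al \<ge> 0 \<and> be \<ge> 0 \<and> (al > 0 \<or> be > 0) \<and> p - u = al *\<^sub>R (v - u) + be *\<^sub>R (w - u)))"
proof (rule core[OF r loc segp segq orient])
  show "\<forall>v\<in>V. v \<noteq> u \<longrightarrow> cross (p - u) (v - u) = 0 \<longrightarrow> v = p"
  proof (intro ballI impI)
    fix v assume v: "v \<in> V" "v \<noteq> u" "cross (p - u) (v - u) = 0"
    show "v = p" using col_eq[OF col uV pV v(1) pu v(2,3)] by simp
  qed
  show "\<forall>v\<in>V. v \<noteq> u \<longrightarrow> cross (v - u) (q - u) = 0 \<longrightarrow> v = q"
  proof (intro ballI impI)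
    fix v assume v: "v \<in> V" "v \<noteq> u" "cross (v - u) (q - u) = 0"
    show "v = q" using col_eq[OF col uV v(1) qV v(2) qu v(3)] .
  qed
qed

lemma geo:
  assumes vs: "valid_setting V S" and uV: "u \<in> V"
  shows "\<exists>X1 X2 z. (\<forall>v\<in>X1. \<forall>w\<in>X1. same_side S u v w) \<and> (\<forall>v\<in>X2. \<forall>w\<in>X2. same_side S u v w) \<and>
     (\<forall>v\<in>V. v \<noteq> u \<longrightarrow> visible S u v \<longrightarrow> v \<in> X1 \<union> X2) \<and>
     (\<forall>b v w. v \<in> V \<longrightarrow> w \<in> V \<longrightarrow> visible S u v \<longrightarrow> visible S u w \<longrightarrow> in_cone b u v \<longrightarrow> in_cone b u w \<longrightarrow>
        \<not> same_side S u v w \<longrightarrow> in_cone b u z)"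
proof (cases "\<exists>Ob\<in>S. u \<in> set Ob")
  case False
  then have "same_side S u v w" for v w unfolding same_side_def by blast
  then show ?thesis by (intro exI[of _ UNIV] exI[of _ u]) simp
next
  case True
  then obtain Ob where Ob: "Ob \<in> S" "u \<in> set Ob" by blast
  have uniq: "\<forall>Ob'\<in>S. u \<in> set Ob' \<longrightarrow> Ob' = Ob" using vs_2[OF vs] Ob by blast
  have sp: "simple_polygon Ob" and sub: "set Ob \<subseteq> V" using vs_1[OF vs] Ob by auto
  have col: "\<forall>a\<in>V. \<forall>b\<in>V. \<forall>c\<in>V. a \<noteq> b \<and> a \<noteq> c \<and> b \<noteq> c \<longrightarrow> \<not> collinear {a, b, c}"
    using vs_3[OF vs] .
  define Bd where "Bd = poly_boundary Ob"
  have ss: "same_side S u v w \<longleftrightarrow> ssI (inside Bd) u v w" for v w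
    unfolding Bd_def by (rule ssI_same_side[OF Ob uniq])
  have visI: "closed_segment u v \<inter> inside Bd = {}" if "visible S u v" for v
    using that Ob unfolding visible_def Bd_def by blast
  obtain p q r where pq: "p \<in> set Ob" "q \<in> set Ob" "p \<noteq> u" "q \<noteq> u" "p \<noteq> q" "r > 0"
    "closed_segment u p \<subseteq> Bd" "closed_segment u q \<subseteq> Bd" "ball u r \<inter> Bd \<subseteq> closed_segment u p \<union> closed_segment u q"
    using local_struct[OF sp Ob(2)] unfolding Bd_def by blast
  have pV: "p \<in> V" and qV: "q \<in> V" using pq sub by auto
  have "cross (p - u) (q - u) \<noteq> 0"
  proof
    assume "cross (p - u) (q - u) = 0"
    then have "p = q" using col_eq[OF col uV pV qV pq(3,4)] by simp
    then show False using pq(5) by simp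
  qed
  then obtain p' where p': "\<exists>X1 X2. (\<forall>v\<in>X1. \<forall>w\<in>X1. ssI (inside Bd) u v w) \<and> (\<forall>v\<in>X2. \<forall>w\<in>X2. ssI (inside Bd) u v w) \<and>
     (\<forall>v\<in>V. v \<noteq> u \<longrightarrow> closed_segment u v \<inter> inside Bd = {} \<longrightarrow> v \<in> X1 \<union> X2) \<and>
     (\<forall>v\<in>V. \<forall>w\<in>V. v \<noteq> u \<longrightarrow> w \<noteq> u \<longrightarrow> closed_segment u v \<inter> inside Bd = {} \<longrightarrow>
        closed_segment u w \<inter> inside Bd = {} \<longrightarrow> \<not> ssI (inside Bd) u v w \<longrightarrow>
         (\<exists>al be. al \<ge> 0 \<and> be \<ge> 0 \<and> (al > 0 \<or> be > 0) \<and> p' - u = al *\<^sub>R (v - u) + be *\<^sub>R (w - u)))"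
  proof (cases "cross (p - u) (q - u) > 0")
    case True
    show ?thesis by (rule that, rule geo_oriented[OF col uV pV qV pq(3,4,6,9,7,8) True])
  next
    case False
    then have o: "cross (q - u) (p - u) > 0" using \<open>cross (p - u) (q - u) \<noteq> 0\<close> cross_anti[of "q - u" "p - u"]
      by linarith
    have loc': "ball u r \<inter> Bd \<subseteq> closed_segment u q \<union> closed_segment u p" using pq(9) by blast
    show ?thesis by (rule that, rule geo_oriented[OF col uV qV pV pq(4,3,6) loc' pq(8,7) o])
  qed
  then obtain X1 X2 where X: "\<forall>v\<in>X1. \<forall>w\<in>X1. ssI (inside Bd) u v w" "\<forall>v\<in>X2. \<forall>w\<in>X2. ssI (inside Bd) u v w"
     "\<forall>v\<in>V. v \<noteq> u \<longrightarrow> closed_segment u v \<inter> inside Bd = {} \<longrightarrow> v \<in> X1 \<union> X2"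
     "\<forall>v\<in>V. \<forall>w\<in>V. v \<noteq> u \<longrightarrow> w \<noteq> u \<longrightarrow> closed_segment u v \<inter> inside Bd = {} \<longrightarrow>
        closed_segment u w \<inter> inside Bd = {} \<longrightarrow> \<not> ssI (inside Bd) u v w \<longrightarrow>
         (\<exists>al be. al \<ge> 0 \<and> be \<ge> 0 \<and> (al > 0 \<or> be > 0) \<and> p' - u = al *\<^sub>R (v - u) + be *\<^sub>R (w - u))"
    by blast
  show ?thesis
  proof (rule exI[of _ X1], rule exI[of _ X2], rule exI[of _ p'], intro conjI allI ballI impI)
    show "same_side S u v w" if "v \<in> X1" "w \<in> X1" for v w using X(1) that ss by blast
    show "same_side S u v w" if "v \<in> X2" "w \<in> X2" for v w using X(2) that ss by blast
    show "v \<in> X1 \<union> X2" if "v \<in> V" "v \<noteq> u" "visible S u v" for v using X(3) that visI by blast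
    show "in_cone b u p'" if H: "v \<in> V" "w \<in> V" "visible S u v" "visible S u w" "in_cone b u v" "in_cone b u w"
      "\<not> same_side S u v w" for b v w
    proof -
      have vu: "v \<noteq> u" "w \<noteq> u" using H(5,6) unfolding in_cone_def by auto
      have nI: "\<not> ssI (inside Bd) u v w" using H(7) ss by simp
      have "\<exists>al be. al \<ge> 0 \<and> be \<ge> 0 \<and> (al > 0 \<or> be > 0) \<and> p' - u = al *\<^sub>R (v - u) + be *\<^sub>R (w - u)"
        using X(4) H(1,2) vu visI[OF H(3)] visI[OF H(4)] nI by simp
      then obtain al be where ab: "al \<ge> 0" "be \<ge> 0" "al > 0 \<or> be > 0" "p' - u = al *\<^sub>R (v - u) + be *\<^sub>R (w - u)"
        by blast
      show ?thesis by (rule cone_convex[OF H(5,6) ab(4,1,2,3)])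
    qed
  qed
qed

lemma cb_pos: "i < 3 \<Longrightarrow> cb i = pos_bis i" by (simp add: cb_def)
lemma cb_neg: "i < 3 \<Longrightarrow> cb (i + 3) = neg_bis i" by (simp add: cb_def)

definition pw :: "('a \<Rightarrow> 'a \<Rightarrow> bool) \<Rightarrow> 'a set \<Rightarrow> bool" where
  "pw R T \<longleftrightarrow> (\<forall>v\<in>T. \<forall>w\<in>T. R v w)"

lemma comb2:
  assumes "finite A" "A \<subseteq> X1 \<union> X2" "pw R X1" "pw R X2" "\<And>T. T \<subseteq> A \<Longrightarrow> pw R T \<Longrightarrow> card T \<le> m"
  shows "card A \<le> 2 * m"
proof -
  have "A = (A \<inter> X1) \<union> (A \<inter> X2)" using assms(2) by blast
  then have "card A \<le> card (A \<inter> X1) + card (A \<inter> X2)" by (metis card_Un_le)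
  moreover have "card (A \<inter> X1) \<le> m"
  proof (rule assms(5))
    show "pw R (A \<inter> X1)" using assms(3) unfolding pw_def by blast
  qed auto
  moreover have "card (A \<inter> X2) \<le> m"
  proof (rule assms(5))
    show "pw R (A \<inter> X2)" using assms(4) unfolding pw_def by blast
  qed auto
  ultimately show ?thesis by simp
qed

lemma card_bound:
  assumes "finite A" "A \<subseteq> X1 \<union> X2" "pw R X1" "pw R X2" "\<And>T. T \<subseteq> A \<Longrightarrow> pw R T \<Longrightarrow> card T \<le> m"
    "\<not> sp \<Longrightarrow> pw R A"
  shows "card A \<le> (if sp then 2 * m else m)"
  using comb2[OF assms(1-5)] assms(5)[of A] assms(6) by auto

lemma card_le1: "finite T \<Longrightarrow> (\<And>v w. v \<in> T \<Longrightarrow> w \<in> T \<Longrightarrow> v = w) \<Longrightarrow> card T \<le> 1"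
proof -
  assume "finite T" "\<And>v w. v \<in> T \<Longrightarrow> w \<in> T \<Longrightarrow> v = w"
  then have "card T \<le> Suc 0" using card_le_Suc0_iff_eq[of T] by blast
  then show ?thesis by simp
qed

theorem lemma5:
  assumes "valid_setting V S" and "u \<in> V"
  shows "degree15 V S u \<le> 15"
proof -
  note vs = assms(1) and uV = assms(2)
  have finV: "finite V" by (rule vs_5[OF vs])
  have col: "\<forall>a\<in>V. \<forall>b\<in>V. \<forall>c\<in>V. a \<noteq> b \<and> a \<noteq> c \<and> b \<noteq> c \<longrightarrow> \<not> collinear {a, b, c}"
    by (rule vs_3[OF vs])
  have gpd: "\<forall>k<(3::nat). cross (w - v) (dir (real k * pi / 3)) \<noteq> 0" if "v \<in> V" "w \<in> V" "v \<noteq> w" for v w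
    using bspec[OF bspec[OF vs_4[OF vs] that(1)] that(2)] that(3) by simp
  obtain X1 X2 z where X: "\<forall>v\<in>X1. \<forall>w\<in>X1. same_side S u v w" "\<forall>v\<in>X2. \<forall>w\<in>X2. same_side S u v w"
     "\<forall>v\<in>V. v \<noteq> u \<longrightarrow> visible S u v \<longrightarrow> v \<in> X1 \<union> X2"
     "\<forall>b v w. v \<in> V \<longrightarrow> w \<in> V \<longrightarrow> visible S u v \<longrightarrow> visible S u w \<longrightarrow> in_cone b u v \<longrightarrow> in_cone b u w \<longrightarrow>
        \<not> same_side S u v w \<longrightarrow> in_cone b u z"
    using geo[OF vs uV] by blast
  define R where "R = same_side S u"
  define sp where "sp j = in_cone (cb j) u z" for j
  have pw1: "pw R X1" "pw R X2" using X(1,2) unfolding pw_def R_def by auto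
  have uniq: "i = j" if "i < 6" "j < 6" "sp i" "sp j" for i j
    using cone_disj[OF that(1,2)] that(3,4) unfolding sp_def by blast
  have pwc: "pw R A" if "\<not> sp j" "\<forall>v\<in>A. v \<in> V \<and> visible S u v \<and> in_cone (cb j) u v" for j A
    unfolding pw_def R_def
  proof (intro ballI)
    fix v w assume "v \<in> A" "w \<in> A"
    then have h: "v \<in> V" "visible S u v" "in_cone (cb j) u v" "w \<in> V" "visible S u w" "in_cone (cb j) u w"
      using that(2) by auto
    show "same_side S u v w"
    proof (rule ccontr)
      assume "\<not> same_side S u v w"
      then have "in_cone (cb j) u z" using X(4)[rule_format, OF h(1) h(4) h(2) h(5) h(3) h(6)] by simp
      then show False using that(1) unfolding sp_def by simp
    qed
  qed
  have cov: "A \<subseteq> X1 \<union> X2" if "\<forall>v\<in>A. v \<in> V \<and> visible S u v \<and> in_cone (cb j) u v" for j A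
  proof
    fix v assume "v \<in> A"
    then have "v \<in> V" "visible S u v" "v \<noteq> u" using that unfolding in_cone_def by auto
    then show "v \<in> X1 \<union> X2" using X(3) by blast
  qed
  define P where "P i = {v \<in> V. in_cone (pos_bis i) u v \<and> visible S u v \<and>
      (\<forall>w\<in>subcone_of V S (pos_bis i) u v. proj (pos_bis i) u v \<le> proj (pos_bis i) u w)}" for i
  define N where "N i = {v \<in> V. in_cone (neg_bis i) u v \<and> visible S u v \<and> ginf_edge V S u v \<and>
      (let NN = {w \<in> subcone_of V S (neg_bis i) u v. ginf_edge V S u w} in
        (\<forall>w\<in>NN. cross (v - u) (w - u) \<ge> 0) \<or>
        (\<forall>w\<in>NN. cross (v - u) (w - u) \<le> 0) \<or>
        (\<forall>w\<in>NN. proj (neg_bis i) u v \<le> proj (neg_bis i) u w))}" for i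
  have boundP: "card (P i) \<le> (if sp i then 2 * 1 else 1)" if i3: "i < 3" for i
  proof (rule card_bound)
    have Pc: "\<forall>v\<in>P i. v \<in> V \<and> visible S u v \<and> in_cone (cb i) u v" unfolding P_def cb_pos[OF i3] by auto
    show "finite (P i)" unfolding P_def using finV by simp
    show "P i \<subseteq> X1 \<union> X2" by (rule cov[OF Pc])
    show "pw R X1" "pw R X2" by (rule pw1(1), rule pw1(2))
    show "\<not> sp i \<Longrightarrow> pw R (P i)" by (rule pwc[OF _ Pc])
    show "card T \<le> 1" if T: "T \<subseteq> P i" "pw R T" for T
    proof (rule card_le1)
      show "finite T" by (rule finite_subset[OF T(1)]) (simp add: P_def finV)
      show "v = w" if vw: "v \<in> T" "w \<in> T" for v w
      proof (rule ccontr)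
        assume ne: "v \<noteq> w"
        have v: "v \<in> V" "in_cone (pos_bis i) u v" "visible S u v"
          "\<forall>x\<in>subcone_of V S (pos_bis i) u v. proj (pos_bis i) u v \<le> proj (pos_bis i) u x"
          using vw T(1) unfolding P_def by auto
        have w: "w \<in> V" "in_cone (pos_bis i) u w" "visible S u w"
          "\<forall>x\<in>subcone_of V S (pos_bis i) u w. proj (pos_bis i) u w \<le> proj (pos_bis i) u x"
          using vw T(1) unfolding P_def by auto
        have s1: "same_side S u v w" "same_side S u w v" using T(2) vw unfolding pw_def R_def by auto
        have "w \<in> subcone_of V S (pos_bis i) u v" unfolding subcone_of_def using w s1 by simp
        moreover have "v \<in> subcone_of V S (pos_bis i) u w" unfolding subcone_of_def using v s1 by simp
        ultimately have "proj (cb i) u v = proj (cb i) u w" using v(4) w(4) cb_pos[OF i3] by force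
        then show False using proj_inj[of i w v u] gpd[OF v(1) w(1) ne] i3 by simp
      qed
    qed
  qed
  have boundN: "card (N i) \<le> (if sp (i + 3) then 2 * 3 else 3)" if i3: "i < 3" for i
  proof (rule card_bound)
    have Nc: "\<forall>v\<in>N i. v \<in> V \<and> visible S u v \<and> in_cone (cb (i + 3)) u v" unfolding N_def cb_neg[OF i3] by auto
    show "finite (N i)" unfolding N_def using finV by simp
    show "N i \<subseteq> X1 \<union> X2" by (rule cov[OF Nc])
    show "pw R X1" "pw R X2" by (rule pw1(1), rule pw1(2))
    show "\<not> sp (i + 3) \<Longrightarrow> pw R (N i)" by (rule pwc[OF _ Nc])
    show "card T \<le> 3" if T: "T \<subseteq> N i" "pw R T" for T
    proof -
      define NN where "NN v = {w \<in> subcone_of V S (neg_bis i) u v. ginf_edge V S u w}" for v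
      have fT: "finite T" by (rule finite_subset[OF T(1)]) (simp add: N_def finV)
      have mem: "v \<in> V \<and> in_cone (neg_bis i) u v \<and> visible S u v \<and> ginf_edge V S u v \<and>
        ((\<forall>w\<in>NN v. cross (v - u) (w - u) \<ge> 0) \<or> (\<forall>w\<in>NN v. cross (v - u) (w - u) \<le> 0) \<or>
         (\<forall>w\<in>NN v. proj (neg_bis i) u v \<le> proj (neg_bis i) u w))" if "v \<in> T" for v
        using that T(1) unfolding N_def NN_def Let_def by auto
      have inNN: "w \<in> NN v" if "v \<in> T" "w \<in> T" for v w
      proof -
        have "same_side S u v w" using T(2) that unfolding pw_def R_def by auto
        then show ?thesis using mem[OF that(2)] unfolding NN_def subcone_of_def by simp
      qed
      have vu: "v \<noteq> u" if "v \<in> T" for v using mem[OF that] unfolding in_cone_def by auto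
      define A1 where "A1 = {v \<in> T. \<forall>w\<in>NN v. cross (v - u) (w - u) \<ge> 0}"
      define A2 where "A2 = {v \<in> T. \<forall>w\<in>NN v. cross (v - u) (w - u) \<le> 0}"
      define A3 where "A3 = {v \<in> T. \<forall>w\<in>NN v. proj (neg_bis i) u v \<le> proj (neg_bis i) u w}"
      have TA: "T \<subseteq> A1 \<union> A2 \<union> A3" using mem unfolding A1_def A2_def A3_def by blast
      have c1: "card A1 \<le> 1"
      proof (rule card_le1)
        show "finite A1" using fT unfolding A1_def by simp
        show "v = w" if "v \<in> A1" "w \<in> A1" for v w
        proof -
          have "cross (v - u) (w - u) \<ge> 0" "cross (w - u) (v - u) \<ge> 0"
            using that inNN unfolding A1_def by auto
          then have "cross (v - u) (w - u) = 0" using cross_anti[of "v - u" "w - u"] by linarith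
          moreover have "v \<in> V" "w \<in> V" "v \<noteq> u" "w \<noteq> u" using mem vu that unfolding A1_def by auto
          ultimately show ?thesis using col_eq[OF col uV] by simp
        qed
      qed
      have c2: "card A2 \<le> 1"
      proof (rule card_le1)
        show "finite A2" using fT unfolding A2_def by simp
        show "v = w" if "v \<in> A2" "w \<in> A2" for v w
        proof -
          have "cross (v - u) (w - u) \<le> 0" "cross (w - u) (v - u) \<le> 0"
            using that inNN unfolding A2_def by auto
          then have "cross (v - u) (w - u) = 0" using cross_anti[of "v - u" "w - u"] by linarith
          moreover have "v \<in> V" "w \<in> V" "v \<noteq> u" "w \<noteq> u" using mem vu that unfolding A2_def by auto
          ultimately show ?thesis using col_eq[OF col uV] by simp
        qed
      qed
      have c3: "card A3 \<le> 1"
      proof (rule card_le1)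
        show "finite A3" using fT unfolding A3_def by simp
        show "v = w" if vw: "v \<in> A3" "w \<in> A3" for v w
        proof (rule ccontr)
          assume ne: "v \<noteq> w"
          have "proj (neg_bis i) u v \<le> proj (neg_bis i) u w" "proj (neg_bis i) u w \<le> proj (neg_bis i) u v"
            using vw inNN unfolding A3_def by auto
          then have "proj (cb (i + 3)) u v = proj (cb (i + 3)) u w" using cb_neg[OF i3] by simp
          moreover have "v \<in> V" "w \<in> V" using vw mem unfolding A3_def by auto
          ultimately show False using proj_inj[of "i + 3" w v u] gpd[of v w] ne i3 by simp
        qed
      qed
      have "card T \<le> card (A1 \<union> A2 \<union> A3)" using TA fT
        by (intro card_mono) (auto simp: A1_def A2_def A3_def)
      also have "\<dots> \<le> card A1 + card A2 + card A3" by (meson card_Un_le add_right_mono order_trans)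
      finally show ?thesis using c1 c2 c3 by simp
    qed
  qed
  define Nb where "Nb = {v \<in> V. g15_edge V S u v}"
  have sub: "Nb \<subseteq> P 0 \<union> P 1 \<union> P 2 \<union> N 0 \<union> N 1 \<union> N 2"
  proof
    fix v assume "v \<in> Nb"
    then have v: "v \<in> V" "ginf_edge V S u v" "keep_at V S u v" unfolding Nb_def g15_edge_def by auto
    have i3: "\<And>i::nat. i < 3 \<Longrightarrow> i = 0 \<or> i = 1 \<or> i = 2" by auto
    show "v \<in> P 0 \<union> P 1 \<union> P 2 \<union> N 0 \<union> N 1 \<union> N 2"
    proof (cases "ginf_choice V S u v")
      case True
      then have "\<exists>i<3. in_cone (pos_bis i) u v \<and> visible S u v \<and>
        (\<forall>w\<in>subcone_of V S (pos_bis i) u v. proj (pos_bis i) u v \<le> proj (pos_bis i) u w)"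
        unfolding ginf_choice_def by (elim conjE)
      then obtain i where i: "i < 3" "in_cone (pos_bis i) u v" "visible S u v"
        "\<forall>w\<in>subcone_of V S (pos_bis i) u v. proj (pos_bis i) u v \<le> proj (pos_bis i) u w"
        by (elim exE conjE)
      then have "v \<in> P i" unfolding P_def using v(1) by simp
      then show ?thesis using i3[OF i(1)] by auto
    next
      case False
      then have "ginf_choice V S v u" using v(2) unfolding ginf_edge_def by simp
      then have "\<exists>i<3. in_cone (pos_bis i) v u \<and> visible S v u \<and>
        (\<forall>w\<in>subcone_of V S (pos_bis i) v u. proj (pos_bis i) v u \<le> proj (pos_bis i) v w)"
        unfolding ginf_choice_def by (elim conjE)
      then obtain i where i: "i < 3" "in_cone (pos_bis i) v u" "visible S v u"
        by (elim exE conjE)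
      have c: "in_cone (neg_bis i) u v" by (rule cone_sym[OF i(2)])
      have vis: "visible S u v" using i(3) visible_sym by blast
      have k: "let NN = {w \<in> subcone_of V S (neg_bis i) u v. ginf_edge V S u w} in
        (\<forall>w\<in>NN. cross (v - u) (w - u) \<ge> 0) \<or>
        (\<forall>w\<in>NN. cross (v - u) (w - u) \<le> 0) \<or>
        (\<forall>w\<in>NN. proj (neg_bis i) u v \<le> proj (neg_bis i) u w)"
        using v(3)[unfolded keep_at_def, rule_format, OF i(1) conjI[OF c vis]] .
      have "v \<in> N i" unfolding N_def mem_Collect_eq using v(1) c vis v(2) k by (intro conjI)
      then show ?thesis using i3[OF i(1)] by auto
    qed
  qed
  have fin: "finite (P i)" "finite (N i)" for i unfolding P_def N_def using finV by auto
  have "degree15 V S u = card Nb" unfolding degree15_def Nb_def ..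
  also have "\<dots> \<le> card (P 0 \<union> P 1 \<union> P 2 \<union> N 0 \<union> N 1 \<union> N 2)"
    by (rule card_mono[OF _ sub]) (simp add: fin)
  also have "\<dots> \<le> card (P 0) + card (P 1) + card (P 2) + card (N 0) + card (N 1) + card (N 2)"
    by (meson card_Un_le add_right_mono order_trans)
  also have "\<dots> \<le> (if sp 0 then 2 else 1) + (if sp 1 then 2 else 1) + (if sp 2 then 2 else 1) +
      (if sp 3 then 6 else 3) + (if sp 4 then 6 else 3) + (if sp 5 then 6 else 3)"
    using boundP[of 0] boundP[of 1] boundP[of 2] boundN[of 0] boundN[of 1] boundN[of 2]
    by (intro add_mono) (auto split: if_splits)
  also have "\<dots> \<le> 15"
    using uniq[of 0 1] uniq[of 0 2] uniq[of 0 3] uniq[of 0 4] uniq[of 0 5]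
      uniq[of 1 2] uniq[of 1 3] uniq[of 1 4] uniq[of 1 5] uniq[of 2 3] uniq[of 2 4] uniq[of 2 5]
      uniq[of 3 4] uniq[of 3 5] uniq[of 4 5]
    by (auto split: if_splits)
  finally show ?thesis .
qed

end
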